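(* Let $\Omega\subset\mathbb R^2$ be a convex, open, bounded polygonal domain, $\omega\subset\Omega$ a non-empty open set, $f\in L^2(\Omega)$, $g\in H^{1/2}(\partial\Omega)$, $a_0>0$, $q\in L^2(\omega)$ given, and $a\in C^1(\partial\Omega)$ with $a\ge a_0$. For $\eta$ in a neighborhood $D(Z_a)$ of $0$ in $C^1(\partial\Omega)$ on which it is well defined, let $Z_a(\eta)=z_h^{(a+\eta)}\in V_h$. Then: (i) there exist $\rho>0$ and $C>0$ such that $\|Z_a(\eta_1)-Z_a(\eta_2)\|_{H^1(\Omega)}\le C\|\eta_1-\eta_2\|_{C^1(\partial\Omega)}$ for all $\eta_1\in D(Z_a)$ and all $\eta_2\in D(Z_a)$ with $\|\eta_2\|_{C^1(\partial\Omega)}\le\rho$; (ii) the Fréchet derivative of $Z_a$ at $0$ (as a map into $H^1(\Omega)$) is $Z_a'(0)\eta=\dot z_h^{(a)}$, where $\dot z_h^{(a)}\in V_h$ is the unique solution of $$b_a(\dot z_h^{(a)},v)=\int_\omega\dot u_h^{(a)}v\,dx-\int_{\partial\Omega}\eta\,z_h^{(a)}v\,ds\quad\text{for all }v\in V_h,$$ and $\dot u_h^{(a)}\in V_h$ is the unique solution of $b_a(\dot u_h^{(a)},v)=-\int_{\partial\Omega}\eta\,u_h^{(a)}v\,ds$ for all $v\in V_h$.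
   Context: For a Robin parameter $\alpha\in C^1(\partial\Omega)$ define $b_\alpha(u,v)=\int_\Omega\nabla u\cdot\nabla v\,dx+\int_{\partial\Omega}\alpha uv\,ds$ and $\ell_{f,g}(v)=\int_{\partial\Omega}gv\,ds-\int_\Omega fv\,dx$. $\mathcal T_h$ is a triangulation of $\Omega$ into triangles forming a simplicial complex, $h=\max_{K\in\mathcal T_h}\mathrm{diam}(K)$, and $V_h=\{v\in H^1(\Omega): v|_K\in\mathbb P^1\ \forall K\in\mathcal T_h\}$. $u_h^{(\alpha)}\in V_h$ solves $b_\alpha(u_h^{(\alpha)},v)=\ell_{f,g}(v)$ for all $v\in V_h$, and $z_h^{(\alpha)}\in V_h$ solves $b_\alpha(z_h^{(\alpha)},v)=-\int_\omega(q-u_h^{(\alpha)})v\,dx$ for all $v\in V_h$. *)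

theory Defs
  imports "HOL-Analysis.Analysis"
begin

type_synonym pt = "real^2"

definition convex_polygonal_domain :: "pt set \<Rightarrow> bool" where
  "convex_polygonal_domain \<Omega> \<longleftrightarrow> open \<Omega> \<and> \<Omega> \<noteq> {} \<and> bounded \<Omega> \<and> convex \<Omega> \<and>
     (\<exists>P. finite P \<and> \<Omega> = interior (convex hull P))"

definition triangle :: "pt set \<Rightarrow> bool" where
  "triangle K \<longleftrightarrow> (\<exists>a b c. K = convex hull {a, b, c} \<and> \<not> collinear {a, b, c})"

definition fe_triangulation :: "pt set set \<Rightarrow> pt set \<Rightarrow> bool" where
  "fe_triangulation T \<Omega> \<longleftrightarrow> finite T \<and> (\<forall>K\<in>T. triangle K) \<and> \<Union>T = closure \<Omega> \<and>
     (\<forall>K1\<in>T. \<forall>K2\<in>T. (K1 \<inter> K2) face_of K1 \<and> (K1 \<inter> K2) face_of K2)"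

text \<open>Ordered pairs of endpoints of the edges of the polygon (each edge counted twice).\<close>
definition bedge :: "pt set \<Rightarrow> pt \<Rightarrow> pt \<Rightarrow> bool" where
  "bedge \<Omega> p q \<longleftrightarrow> p \<noteq> q \<and> closed_segment p q face_of closure \<Omega>"

definition seg :: "pt \<Rightarrow> pt \<Rightarrow> real \<Rightarrow> pt" where
  "seg p q t = p + t *\<^sub>R (q - p)"

definition bint :: "pt set \<Rightarrow> (pt \<Rightarrow> real) \<Rightarrow> real" where
  "bint \<Omega> F = (\<Sum>pq\<in>{(p, q). bedge \<Omega> p q}.
       dist (fst pq) (snd pq) * integral {0..1} (\<lambda>t. F (seg (fst pq) (snd pq) t))) / 2"

definition L2_on :: "pt set \<Rightarrow> (pt \<Rightarrow> real) \<Rightarrow> bool" where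
  "L2_on S f \<longleftrightarrow> f measurable_on S \<and> (\<lambda>x. (f x)^2) integrable_on S"

text \<open>H^{1/2}(boundary): L^2 on the boundary plus finite Gagliardo seminorm.\<close>
definition H12_bdry :: "pt set \<Rightarrow> (pt \<Rightarrow> real) \<Rightarrow> bool" where
  "H12_bdry \<Omega> g \<longleftrightarrow>
     (\<forall>p q. bedge \<Omega> p q \<longrightarrow> (\<lambda>t. g (seg p q t)) measurable_on {0..1} \<and>
                               (\<lambda>t. (g (seg p q t))^2) integrable_on {0..1}) \<and>
     (\<forall>p q p' q'. bedge \<Omega> p q \<and> bedge \<Omega> p' q' \<longrightarrow>
        (\<lambda>z::real \<times> real. (g (seg p q (fst z)) - g (seg p' q' (snd z)))^2
              / (norm (seg p q (fst z) - seg p' q' (snd z)))^2) integrable_on ({0..1} \<times> {0..1}))"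

definition edge_deriv :: "(pt \<Rightarrow> real) \<Rightarrow> pt \<Rightarrow> pt \<Rightarrow> real \<Rightarrow> real" where
  "edge_deriv \<eta> p q t = (THE d. ((\<lambda>s. \<eta> (seg p q s)) has_real_derivative d) (at t within {0..1}))"

text \<open>C^1(boundary): C^1 along each edge up to the endpoints, and the tangential
  derivative is continuous across the corners (one-sided directional derivatives along
  the two edges leaving a vertex sum to zero).\<close>
definition C1_bdry :: "pt set \<Rightarrow> (pt \<Rightarrow> real) set" where
  "C1_bdry \<Omega> = {\<eta>.
     (\<forall>p q. bedge \<Omega> p q \<longrightarrow>
        (\<forall>t\<in>{0..1}. ((\<lambda>s. \<eta> (seg p q s)) has_real_derivative edge_deriv \<eta> p q t) (at t within {0..1}))
        \<and> continuous_on {0..1} (edge_deriv \<eta> p q)) \<and>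
     (\<forall>p q r. bedge \<Omega> q p \<and> bedge \<Omega> q r \<and> p \<noteq> r \<longrightarrow>
        edge_deriv \<eta> q p 0 / dist q p + edge_deriv \<eta> q r 0 / dist q r = 0)}"

definition C1_norm :: "pt set \<Rightarrow> (pt \<Rightarrow> real) \<Rightarrow> real" where
  "C1_norm \<Omega> \<eta> = (SUP x\<in>frontier \<Omega>. \<bar>\<eta> x\<bar>) +
     (SUP z\<in>{(p, q, t). bedge \<Omega> p q \<and> t \<in> {0..1}}.
        \<bar>edge_deriv \<eta> (fst z) (fst (snd z)) (snd (snd z))\<bar> / dist (fst z) (fst (snd z)))"

definition grad :: "(pt \<Rightarrow> real) \<Rightarrow> pt \<Rightarrow> pt" where
  "grad u x = (THE g. (u has_derivative (\<lambda>h. g \<bullet> h)) (at x))"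

definition H1_norm :: "pt set \<Rightarrow> (pt \<Rightarrow> real) \<Rightarrow> real" where
  "H1_norm \<Omega> w = sqrt (integral \<Omega> (\<lambda>x. (w x)^2 + (norm (grad w x))^2))"

text \<open>P1 finite element space (continuous representatives, extended by 0 outside the closure).\<close>
definition Vh :: "pt set set \<Rightarrow> pt set \<Rightarrow> (pt \<Rightarrow> real) set" where
  "Vh T \<Omega> = {v. (\<forall>K\<in>T. \<exists>c::pt. \<exists>d::real. \<forall>x\<in>K. v x = c \<bullet> x + d) \<and>
                  (\<forall>x. x \<notin> closure \<Omega> \<longrightarrow> v x = 0)}"

definition bform :: "pt set \<Rightarrow> (pt \<Rightarrow> real) \<Rightarrow> (pt \<Rightarrow> real) \<Rightarrow> (pt \<Rightarrow> real) \<Rightarrow> real" where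
  "bform \<Omega> \<alpha> u v = integral \<Omega> (\<lambda>x. grad u x \<bullet> grad v x) + bint \<Omega> (\<lambda>x. \<alpha> x * u x * v x)"

definition lform :: "pt set \<Rightarrow> (pt \<Rightarrow> real) \<Rightarrow> (pt \<Rightarrow> real) \<Rightarrow> (pt \<Rightarrow> real) \<Rightarrow> real" where
  "lform \<Omega> f g v = bint \<Omega> (\<lambda>x. g x * v x) - integral \<Omega> (\<lambda>x. f x * v x)"

definition u_eq where
  "u_eq T \<Omega> f g \<alpha> u \<longleftrightarrow> u \<in> Vh T \<Omega> \<and> (\<forall>v\<in>Vh T \<Omega>. bform \<Omega> \<alpha> u v = lform \<Omega> f g v)"

definition uh where
  "uh T \<Omega> f g \<alpha> = (THE u. u_eq T \<Omega> f g \<alpha> u)"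

definition z_eq where
  "z_eq T \<Omega> \<omega> f g q \<alpha> z \<longleftrightarrow> z \<in> Vh T \<Omega> \<and>
     (\<forall>v\<in>Vh T \<Omega>. bform \<Omega> \<alpha> z v = - integral \<omega> (\<lambda>x. (q x - uh T \<Omega> f g \<alpha> x) * v x))"

definition zh where
  "zh T \<Omega> \<omega> f g q \<alpha> = (THE z. z_eq T \<Omega> \<omega> f g q \<alpha> z)"

definition disc_well_defined where
  "disc_well_defined T \<Omega> \<omega> f g q \<alpha> \<longleftrightarrow>
     (\<exists>!u. u_eq T \<Omega> f g \<alpha> u) \<and> (\<exists>!z. z_eq T \<Omega> \<omega> f g q \<alpha> z)"

definition Za where
  "Za T \<Omega> \<omega> f g q a \<eta> = zh T \<Omega> \<omega> f g q (\<lambda>x. a x + \<eta> x)"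

definition udot_eq where
  "udot_eq T \<Omega> f g a \<eta> w \<longleftrightarrow> w \<in> Vh T \<Omega> \<and>
     (\<forall>v\<in>Vh T \<Omega>. bform \<Omega> a w v = - bint \<Omega> (\<lambda>x. \<eta> x * uh T \<Omega> f g a x * v x))"

definition udot where
  "udot T \<Omega> f g a \<eta> = (THE w. udot_eq T \<Omega> f g a \<eta> w)"

definition zdot_eq where
  "zdot_eq T \<Omega> \<omega> f g q a \<eta> w \<longleftrightarrow> w \<in> Vh T \<Omega> \<and>
     (\<forall>v\<in>Vh T \<Omega>. bform \<Omega> a w v =
        integral \<omega> (\<lambda>x. udot T \<Omega> f g a \<eta> x * v x)
        - bint \<Omega> (\<lambda>x. \<eta> x * zh T \<Omega> \<omega> f g q a x * v x))"

definition zdot where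
  "zdot T \<Omega> \<omega> f g q a \<eta> = (THE w. zdot_eq T \<Omega> \<omega> f g q a \<eta> w)"

end

theory Submission
  imports Defs
begin


definition subsp :: "('x \<Rightarrow> real) set \<Rightarrow> bool" where
  "subsp V \<longleftrightarrow> (\<lambda>x. 0) \<in> V \<and> (\<forall>u\<in>V. \<forall>v\<in>V. (\<lambda>x. u x + v x) \<in> V) \<and> (\<forall>u\<in>V. \<forall>c. (\<lambda>x. c * u x) \<in> V)"

definition linf :: "('x \<Rightarrow> real) set \<Rightarrow> (('x \<Rightarrow> real) \<Rightarrow> real) \<Rightarrow> bool" where
  "linf V \<phi> \<longleftrightarrow> (\<forall>u\<in>V. \<forall>v\<in>V. \<phi> (\<lambda>x. u x + v x) = \<phi> u + \<phi> v) \<and> (\<forall>u\<in>V. \<forall>c. \<phi> (\<lambda>x. c * u x) = c * \<phi> u)"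

definition bilg :: "('x \<Rightarrow> real) set \<Rightarrow> (('x \<Rightarrow> real) \<Rightarrow> ('x \<Rightarrow> real) \<Rightarrow> real) \<Rightarrow> bool" where
  "bilg V p \<longleftrightarrow> (\<forall>u\<in>V. linf V (p u)) \<and> (\<forall>v\<in>V. linf V (\<lambda>u. p u v))"

definition symf :: "('x \<Rightarrow> real) set \<Rightarrow> (('x \<Rightarrow> real) \<Rightarrow> ('x \<Rightarrow> real) \<Rightarrow> real) \<Rightarrow> bool" where
  "symf V b \<longleftrightarrow> (\<forall>u\<in>V. \<forall>v\<in>V. b u v = b v u)"

definition posd :: "('x \<Rightarrow> real) set \<Rightarrow> (('x \<Rightarrow> real) \<Rightarrow> ('x \<Rightarrow> real) \<Rightarrow> real) \<Rightarrow> bool" where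
  "posd V b \<longleftrightarrow> (\<forall>v\<in>V. v \<noteq> (\<lambda>x. 0) \<longrightarrow> b v v > 0)"

definition lc :: "(('x \<Rightarrow> real) \<Rightarrow> real) \<Rightarrow> ('x \<Rightarrow> real) set \<Rightarrow> 'x \<Rightarrow> real" where
  "lc c E = (\<lambda>x. \<Sum>e\<in>E. c e * e x)"

definition onb :: "('x \<Rightarrow> real) set \<Rightarrow> (('x \<Rightarrow> real) \<Rightarrow> ('x \<Rightarrow> real) \<Rightarrow> real) \<Rightarrow> ('x \<Rightarrow> real) set \<Rightarrow> bool" where
  "onb V b E \<longleftrightarrow> finite E \<and> E \<subseteq> V \<and> (\<forall>e\<in>E. \<forall>e'\<in>E. b e e' = (if e = e' then 1 else 0))
     \<and> (\<forall>v\<in>V. v = lc (b v) E)"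

lemma subspD:
  assumes "subsp V"
  shows "(\<lambda>x. 0) \<in> V" "u \<in> V \<Longrightarrow> v \<in> V \<Longrightarrow> (\<lambda>x. u x + v x) \<in> V" "u \<in> V \<Longrightarrow> (\<lambda>x. c * u x) \<in> V"
  using assms unfolding subsp_def by auto

lemma subsp_diff: "subsp V \<Longrightarrow> u \<in> V \<Longrightarrow> v \<in> V \<Longrightarrow> (\<lambda>x. u x - v x) \<in> V"
  using subspD(2)[of V u "\<lambda>x. (-1) * v x"] subspD(3)[of V v "-1"] by simp

lemma linfD:
  assumes "linf V \<phi>"
  shows "u \<in> V \<Longrightarrow> v \<in> V \<Longrightarrow> \<phi> (\<lambda>x. u x + v x) = \<phi> u + \<phi> v" "u \<in> V \<Longrightarrow> \<phi> (\<lambda>x. c * u x) = c * \<phi> u"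
  using assms unfolding linf_def by auto

lemma linf_zero: "linf V \<phi> \<Longrightarrow> subsp V \<Longrightarrow> \<phi> (\<lambda>x. 0) = 0"
  using linfD(2)[of V \<phi> "\<lambda>x. 0" 0] subspD(1)[of V] by simp

lemma linf_diff: "linf V \<phi> \<Longrightarrow> subsp V \<Longrightarrow> u \<in> V \<Longrightarrow> v \<in> V \<Longrightarrow> \<phi> (\<lambda>x. u x - v x) = \<phi> u - \<phi> v"
  using linfD(1)[of V \<phi> u "\<lambda>x. (-1) * v x"] linfD(2)[of V \<phi> v "-1"] subspD(3)[of V v "-1"] by simp

lemma linf_mono: "linf V \<phi> \<Longrightarrow> W \<subseteq> V \<Longrightarrow> linf W \<phi>"
  unfolding linf_def by blast

lemma lc_empty[simp]: "lc c {} = (\<lambda>x. 0)" by (simp add: lc_def)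

lemma lc_insert: "finite E \<Longrightarrow> e \<notin> E \<Longrightarrow> lc c (insert e E) = (\<lambda>x. c e * e x + lc c E x)"
  by (simp add: lc_def)

lemma lc_in: assumes "subsp V" "finite E" "E \<subseteq> V" shows "lc c E \<in> V"
  using assms(2,3)
proof (induction E rule: finite_induct)
  case empty then show ?case by (simp add: subspD[OF assms(1)])
next
  case (insert e E)
  then show ?case by (simp add: lc_insert subspD[OF assms(1)])
qed

lemma linf_lc: assumes "linf V \<phi>" "subsp V" "finite E" "E \<subseteq> V" shows "\<phi> (lc c E) = (\<Sum>e\<in>E. c e * \<phi> e)"
  using assms(3,4)
proof (induction E rule: finite_induct)
  case empty then show ?case by (simp add: linf_zero[OF assms(1,2)])
next
  case (insert e E)
  have "\<phi> (lc c (insert e E)) = \<phi> (\<lambda>x. (\<lambda>x. c e * e x) x + lc c E x)"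
    using insert by (simp add: lc_insert)
  also have "\<dots> = c e * \<phi> e + \<phi> (lc c E)"
    using insert lc_in[OF assms(2), of E c] by (simp add: linfD[OF assms(1)] subspD[OF assms(2)])
  finally show ?case using insert by simp
qed

lemma lc_cong: "(\<And>e. e \<in> E \<Longrightarrow> c e = d e) \<Longrightarrow> lc c E = lc d E"
  by (simp add: lc_def)

lemma bilgD:
  assumes "bilg V p"
  shows "u \<in> V \<Longrightarrow> linf V (p u)" "v \<in> V \<Longrightarrow> linf V (\<lambda>u. p u v)"
  using assms unfolding bilg_def by auto

lemma bilg_mono: "bilg V p \<Longrightarrow> W \<subseteq> V \<Longrightarrow> bilg W p"
  unfolding bilg_def linf_def by blast

lemma onb_exists:
  assumes "finite \<Phi>" "subsp V" "\<forall>\<phi>\<in>\<Phi>. linf V \<phi>" "\<forall>v\<in>V. (\<forall>\<phi>\<in>\<Phi>. \<phi> v = 0) \<longrightarrow> v = (\<lambda>x. 0)"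
    "bilg V b" "symf V b" "posd V b"
  shows "\<exists>E. onb V b E"
  using assms
proof (induction \<Phi> arbitrary: V rule: finite_induct)
  case empty
  then have "V = {\<lambda>x. 0}" using subspD(1) by auto
  show ?case
    by (rule exI[of _ "{}"]) (simp add: onb_def \<open>V = {\<lambda>x. 0}\<close>)
next
  case (insert \<phi> \<Phi>)
  have l\<phi>: "linf V \<phi>" using insert by simp
  show ?case
  proof (cases "\<forall>v\<in>V. \<phi> v = 0")
    case True
    then show ?thesis using insert.IH[of V] insert.prems by auto
  next
    case False
    then obtain w0 where w0: "w0 \<in> V" "\<phi> w0 \<noteq> 0" by auto
    define V' where "V' = {v\<in>V. \<phi> v = 0}"
    have V'V: "V' \<subseteq> V" by (auto simp: V'_def)
    have sV0: "subsp V" using insert.prems by simp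
    have sV': "subsp V'"
      unfolding V'_def subsp_def using subspD[OF sV0] linf_zero[OF l\<phi> sV0] linfD[OF l\<phi>] by auto
    have "\<exists>E. onb V' b E"
      apply (rule insert.IH[OF sV'])
      using insert.prems V'V linf_mono[of V _ V'] bilg_mono[of V b V'] unfolding symf_def posd_def
      by (auto simp: V'_def)
    then obtain E' where E': "onb V' b E'" by blast
    have fE': "finite E'" and E'V': "E' \<subseteq> V'" and oE': "\<forall>e\<in>E'. \<forall>e'\<in>E'. b e e' = (if e = e' then 1 else 0)"
      and spE': "\<forall>v\<in>V'. v = lc (b v) E'" using E' by (auto simp: onb_def)
    have E'V: "E' \<subseteq> V" using E'V' V'V by auto
    have sV: "subsp V" using insert.prems by simp
    have bil: "bilg V b" and sym: "symf V b" and pd: "posd V b" using insert.prems by auto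
    define w1 where "w1 = (\<lambda>x. w0 x - lc (b w0) E' x)"
    have w1V: "w1 \<in> V" unfolding w1_def using subsp_diff[OF sV w0(1) lc_in[OF sV fE' E'V]] .
    have "\<phi> w1 = \<phi> w0 - (\<Sum>e\<in>E'. b w0 e * \<phi> e)"
      unfolding w1_def using linf_diff[OF l\<phi> sV w0(1) lc_in[OF sV fE' E'V]] linf_lc[OF l\<phi> sV fE' E'V] by simp
    also have "\<dots> = \<phi> w0" using E'V' by (auto simp: V'_def subset_iff intro!: sum.neutral)
    finally have pw1: "\<phi> w1 = \<phi> w0" .
    have w1ne: "w1 \<noteq> (\<lambda>x. 0)" using pw1 w0(2) linf_zero[OF l\<phi> sV] by auto
    define nn where "nn = b w1 w1"
    have nnpos: "nn > 0" using pd w1V w1ne by (auto simp: posd_def nn_def)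
    have bw1: "b e w1 = 0" if e: "e \<in> E'" for e
    proof -
      have eV: "e \<in> V" using e E'V by auto
      have "b e w1 = b e w0 - b e (lc (b w0) E')"
        unfolding w1_def using linf_diff[OF bilgD(1)[OF bil eV] sV w0(1) lc_in[OF sV fE' E'V]] .
      also have "b e (lc (b w0) E') = (\<Sum>e'\<in>E'. b w0 e' * b e e')"
        using linf_lc[OF bilgD(1)[OF bil eV] sV fE' E'V] .
      also have "\<dots> = (\<Sum>e'\<in>E'. b w0 e' * (if e = e' then 1 else 0))"
        using oE' e by (intro sum.cong) auto
      also have "\<dots> = b w0 e" using e fE' by (simp add: if_distrib sum.delta cong: if_cong)
      finally show ?thesis using sym eV w0(1) by (simp add: symf_def)
    qed
    define es where "es = (\<lambda>x. (1 / sqrt nn) * w1 x)"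
    have esV: "es \<in> V" unfolding es_def using subspD(3)[OF sV w1V] .
    have bes_e: "b es e = 0" "b e es = 0" if e: "e \<in> E'" for e
    proof -
      have eV: "e \<in> V" using e E'V by auto
      have "b e es = 0" unfolding es_def using linfD(2)[OF bilgD(1)[OF bil eV] w1V, of "1 / sqrt nn"] bw1[OF e]
        by (simp only: mult_zero_right)
      then show "b e es = 0" "b es e = 0" using sym eV esV by (auto simp: symf_def)
    qed
    have bes: "b es es = 1"
    proof -
      have h1: "b es es = (1 / sqrt nn) * b w1 es"
        using linfD(2)[OF bilgD(2)[OF bil esV] w1V, of "1 / sqrt nn"] by (simp only: es_def)
      have h2: "b w1 es = (1 / sqrt nn) * b w1 w1"
        using linfD(2)[OF bilgD(1)[OF bil w1V] w1V, of "1 / sqrt nn"] by (simp only: es_def)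
      have "b es es = (1 / sqrt nn) * (1 / sqrt nn) * nn" using h1 h2 by (simp add: nn_def)
      also have "\<dots> = 1" using nnpos by (simp add: field_simps)
      finally show ?thesis .
    qed
    have esn: "es \<notin> E'" using bes bes_e by force
    have pes: "\<phi> es \<noteq> 0"
    proof -
      have "\<phi> es = (1 / sqrt nn) * \<phi> w1"
        using linfD(2)[OF l\<phi> w1V, of "1 / sqrt nn"] by (simp only: es_def)
      then show ?thesis using pw1 w0(2) nnpos by simp
    qed
    define E where "E = insert es E'"
    have "onb V b E"
      unfolding onb_def
    proof (intro conjI ballI)
      show "finite E" using fE' by (simp add: E_def)
      show "E \<subseteq> V" using E'V esV by (simp add: E_def)
    next
      fix e e' assume "e \<in> E" "e' \<in> E"
      then show "b e e' = (if e = e' then 1 else 0)"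
        using oE' bes bes_e esn unfolding E_def by auto
    next
      fix v assume vV: "v \<in> V"
      define t where "t = \<phi> v / \<phi> es"
      define v' where "v' = (\<lambda>x. v x - t * es x)"
      have v'V: "v' \<in> V" unfolding v'_def using subsp_diff[OF sV vV subspD(3)[OF sV esV]] .
      have "\<phi> v' = \<phi> v - t * \<phi> es"
        unfolding v'_def using linf_diff[OF l\<phi> sV vV subspD(3)[OF sV esV]] linfD(2)[OF l\<phi> esV] by simp
      then have "\<phi> v' = 0" using pes by (simp add: t_def)
      then have v'V': "v' \<in> V'" using v'V by (simp add: V'_def)
      have bv': "b v' e = b v e" if e: "e \<in> E'" for e
      proof -
        have eV: "e \<in> V" using e E'V by auto
        have "b v' e = b v e - t * b es e"
          unfolding v'_def using linf_diff[OF bilgD(2)[OF bil eV] sV vV subspD(3)[OF sV esV]]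
            linfD(2)[OF bilgD(2)[OF bil eV] esV] by simp
        then show ?thesis using bes_e[OF e] by simp
      qed
      have v'eq: "v' = lc (b v) E'" using spE' v'V' lc_cong[of E' "b v'" "b v"] bv' by metis
      have "b v es = b v' es + t * b es es"
        using linfD(1)[OF bilgD(2)[OF bil esV] v'V subspD(3)[OF sV esV], symmetric]
          linfD(2)[OF bilgD(2)[OF bil esV] esV] unfolding v'_def by simp
      also have "b v' es = (\<Sum>e\<in>E'. b v e * b e es)"
        unfolding v'eq using linf_lc[OF bilgD(2)[OF bil esV] sV fE' E'V] .
      also have "\<dots> = 0" using bes_e by simp
      finally have bves: "b v es = t" using bes by simp
      have "lc (b v) E = (\<lambda>x. t * es x + v' x)"
        unfolding E_def using lc_insert[OF fE' esn] bves v'eq by simp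
      also have "\<dots> = v" unfolding v'_def by simp
      finally show "v = lc (b v) E" by simp
    qed
    then show ?thesis by blast
  qed
qed


lemma onbD:
  assumes "onb V b E"
  shows "finite E" "E \<subseteq> V" "e \<in> E \<Longrightarrow> e' \<in> E \<Longrightarrow> b e e' = (if e = e' then 1 else 0)"
    "v \<in> V \<Longrightarrow> v = lc (b v) E"
  using assms unfolding onb_def by (blast+)

lemma riesz:
  assumes "onb V b E" "subsp V" "bilg V b" "symf V b" "linf V L"
  shows "lc L E \<in> V" "\<forall>v\<in>V. b (lc L E) v = L v"
proof -
  note E = onbD[OF assms(1)]
  show "lc L E \<in> V" using lc_in[OF assms(2) E(1) E(2)] .
  show "\<forall>v\<in>V. b (lc L E) v = L v"
  proof
    fix v assume v: "v \<in> V"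
    have "b (lc L E) v = (\<Sum>e\<in>E. L e * b e v)"
      using linf_lc[OF bilgD(2)[OF assms(3) v] assms(2) E(1) E(2)] .
    also have "\<dots> = (\<Sum>e\<in>E. b v e * L e)"
      using assms(4) v E(2) by (intro sum.cong) (auto simp: symf_def)
    also have "\<dots> = L (lc (b v) E)"
      using linf_lc[OF assms(5) assms(2) E(1) E(2)] by simp
    also have "\<dots> = L v" by (rule sym, rule arg_cong[OF E(4)[OF v]])
    finally show "b (lc L E) v = L v" .
  qed
qed

lemma uniq:
  assumes "subsp V" "bilg V b" "posd V b" "u1 \<in> V" "u2 \<in> V"
    "\<forall>v\<in>V. b u1 v = b u2 v"
  shows "u1 = u2"
proof -
  have dV: "(\<lambda>x. u1 x - u2 x) \<in> V" using subsp_diff[OF assms(1,4,5)] .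
  have "b u1 (\<lambda>x. u1 x - u2 x) = b u2 (\<lambda>x. u1 x - u2 x)" using assms(6) dV by blast
  then have "b (\<lambda>x. u1 x - u2 x) (\<lambda>x. u1 x - u2 x) = 0"
    using linf_diff[OF bilgD(2)[OF assms(2) dV] assms(1,4,5)] by simp
  then have "(\<lambda>x. u1 x - u2 x) = (\<lambda>x. 0)" using assms(3) dV unfolding posd_def by force
  then show ?thesis by (simp add: fun_eq_iff)
qed

lemma onb_norm:
  assumes "onb V b E" "subsp V" "bilg V b" "v \<in> V"
  shows "b v v = (\<Sum>e\<in>E. (b v e)\<^sup>2)"
proof -
  note E = onbD[OF assms(1)]
  have "b v v = b v (lc (b v) E)" by (rule arg_cong[OF E(4)[OF assms(4)]])
  also have "\<dots> = (\<Sum>e\<in>E. b v e * b v e)" using linf_lc[OF bilgD(1)[OF assms(3,4)] assms(2) E(1) E(2)] .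
  finally show ?thesis by (simp add: power2_eq_square)
qed

lemma onb_coef:
  assumes "onb V b E" "subsp V" "bilg V b" "v \<in> V" "e \<in> E"
  shows "\<bar>b v e\<bar> \<le> sqrt (b v v)"
proof -
  note E = onbD[OF assms(1)]
  have "(b v e)\<^sup>2 \<le> (\<Sum>e\<in>E. (b v e)\<^sup>2)"
    using E(1) assms(5) by (intro member_le_sum) auto
  then have "(b v e)\<^sup>2 \<le> b v v" using onb_norm[OF assms(1-4)] by simp
  then show ?thesis by (metis real_le_rsqrt power2_abs)
qed

lemma onb_nonneg:
  assumes "onb V b E" "subsp V" "bilg V b" "v \<in> V"
  shows "b v v \<ge> 0"
  using onb_norm[OF assms] by (simp add: sum_nonneg)

lemma lin_bound:
  assumes "onb V b E" "subsp V" "bilg V b" "linf V L" "v \<in> V"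
  shows "\<bar>L v\<bar> \<le> (\<Sum>e\<in>E. \<bar>L e\<bar>) * sqrt (b v v)"
proof -
  note E = onbD[OF assms(1)]
  have "L v = L (lc (b v) E)" by (rule arg_cong[OF E(4)[OF assms(5)]])
  also have "\<dots> = (\<Sum>e\<in>E. b v e * L e)" by (rule linf_lc[OF assms(4,2) E(1) E(2)])
  finally have "L v = (\<Sum>e\<in>E. b v e * L e)" .
  then have "\<bar>L v\<bar> \<le> (\<Sum>e\<in>E. \<bar>b v e\<bar> * \<bar>L e\<bar>)"
    by (simp add: sum_abs[THEN order_trans] abs_mult)
  also have "\<dots> \<le> (\<Sum>e\<in>E. sqrt (b v v) * \<bar>L e\<bar>)"
    using onb_coef[OF assms(1-3,5)] by (intro sum_mono mult_right_mono) auto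
  finally show ?thesis by (simp add: sum_distrib_left mult.commute)
qed

lemma bil_bound:
  assumes "onb V b E" "subsp V" "bilg V b" "bilg V p" "u \<in> V" "v \<in> V"
  shows "\<bar>p u v\<bar> \<le> (\<Sum>e\<in>E. \<Sum>e'\<in>E. \<bar>p e e'\<bar>) * sqrt (b u u) * sqrt (b v v)"
proof -
  note E = onbD[OF assms(1)]
  have "\<bar>p u v\<bar> \<le> (\<Sum>e\<in>E. \<bar>p e v\<bar>) * sqrt (b u u)"
    using lin_bound[OF assms(1-3) bilgD(2)[OF assms(4,6)] assms(5)] by simp
  also have "\<dots> \<le> (\<Sum>e\<in>E. (\<Sum>e'\<in>E. \<bar>p e e'\<bar>) * sqrt (b v v)) * sqrt (b u u)"
    using lin_bound[OF assms(1-3) bilgD(1)[OF assms(4)] assms(6)] E(2) onb_nonneg[OF assms(1-3,5)]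
    by (intro mult_right_mono sum_mono) auto
  also have "\<dots> = ((\<Sum>e\<in>E. \<Sum>e'\<in>E. \<bar>p e e'\<bar>) * sqrt (b v v)) * sqrt (b u u)"
    by (simp only: sum_distrib_right)
  finally show ?thesis by (simp only: mult_ac)
qed




lemma seg_in_segment: "t \<in> {0..1} \<Longrightarrow> seg p q t \<in> closed_segment p q"
  unfolding seg_def in_segment
  by (rule exI[of _ t]) (auto simp: algebra_simps)

lemma segment_seg: "x \<in> closed_segment p q \<Longrightarrow> \<exists>t\<in>{0..1}. x = seg p q t"
  unfolding seg_def in_segment
  by (auto simp: algebra_simps)

locale poly =
  fixes \<Omega> :: "(real^2) set"
  assumes cpd: "convex_polygonal_domain \<Omega>"
begin

lemma basics: "open \<Omega>" "\<Omega> \<noteq> {}" "bounded \<Omega>" "convex \<Omega>"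
  using cpd unfolding convex_polygonal_domain_def by auto

lemma P_ex: "\<exists>P. finite P \<and> closure \<Omega> = convex hull P"
proof -
  obtain P where P: "finite P" "\<Omega> = interior (convex hull P)"
    using cpd unfolding convex_polygonal_domain_def by auto
  have "closure \<Omega> = closure (convex hull P)"
    using P basics(2) by (simp add: convex_closure_interior convex_convex_hull)
  also have "\<dots> = convex hull P"
    using P(1) by (simp add: closure_convex_hull finite_imp_compact)
  finally show ?thesis using P(1) by blast
qed

lemma int_cl: "interior (closure \<Omega>) = \<Omega>"
  using basics by (simp add: convex_interior_closure interior_open)

lemma frontier_eq: "frontier \<Omega> = rel_frontier (closure \<Omega>)"
proof -
  have "rel_frontier (closure \<Omega>) = frontier (closure \<Omega>)"
    using int_cl basics by (simp add: rel_frontier_nonempty_interior)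
  also have "\<dots> = closure \<Omega> - \<Omega>" using int_cl by (simp add: frontier_def)
  also have "\<dots> = frontier \<Omega>" using basics by (simp add: frontier_def interior_open)
  finally show ?thesis by simp
qed

lemma bedge_frontier:
  assumes "bedge \<Omega> p q" shows "closed_segment p q \<subseteq> frontier \<Omega>"
proof -
  have f: "closed_segment p q face_of closure \<Omega>" using assms by (simp add: bedge_def)
  have "closed_segment p q \<noteq> closure \<Omega>"
    using int_cl basics interior_closed_segment_ge2[of p q] by auto
  then show ?thesis using face_of_subset_rel_frontier[OF f] frontier_eq by simp
qed

lemma bedge_seg_frontier: "bedge \<Omega> p q \<Longrightarrow> t \<in> {0..1} \<Longrightarrow> seg p q t \<in> frontier \<Omega>"
  using bedge_frontier seg_in_segment by blast

lemma bedge_finite: "finite {(p, q). bedge \<Omega> p q}"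
proof -
  obtain P where P: "finite P" "closure \<Omega> = convex hull P" using P_ex by blast
  have "{(p, q). bedge \<Omega> p q} \<subseteq> P \<times> P"
  proof safe
    fix p q assume b: "bedge \<Omega> p q"
    then have f: "closed_segment p q face_of convex hull P" using P by (simp add: bedge_def)
    have "p extreme_point_of closed_segment p q" "q extreme_point_of closed_segment p q"
      by (auto simp: extreme_point_of_segment)
    then have "p extreme_point_of convex hull P" "q extreme_point_of convex hull P"
      using extreme_point_of_face[OF f] by auto
    then show "p \<in> P" "q \<in> P" using extreme_point_of_convex_hull by auto
  qed
  then show ?thesis using P(1) finite_subset by blast
qed

lemma frontier_edges: "x \<in> frontier \<Omega> \<Longrightarrow> \<exists>p q. bedge \<Omega> p q \<and> x \<in> closed_segment p q"
proof -
  assume x: "x \<in> frontier \<Omega>"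
  obtain P where P: "finite P" "closure \<Omega> = convex hull P" using P_ex by blast
  have pt: "polytope (closure \<Omega>)" using P by (simp add: polytope_convex_hull)
  then obtain F where F: "F facet_of closure \<Omega>" "x \<in> F"
    using x frontier_eq rel_frontier_of_polyhedron[OF polytope_imp_polyhedron[OF pt]] by auto
  have ad: "aff_dim (closure \<Omega>) = 2"
    using aff_dim_nonempty_interior[of "closure \<Omega>"] int_cl basics by simp
  have Ff: "F face_of closure \<Omega>" "F \<noteq> {}" "aff_dim F = 1"
    using F(1) ad by (auto simp: facet_of_def)
  have pF: "polytope F" using face_of_polytope_polytope[OF pt Ff(1)] .
  have "collinear F" using Ff(3) by (simp add: collinear_aff_dim)
  then obtain p q where pq: "F = closed_segment p q"
    using compact_convex_collinear_segment[OF Ff(2) polytope_imp_compact[OF pF] polytope_imp_convex[OF pF]]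
    by blast
  have "p \<noteq> q" using Ff(3) pq by auto
  then have "bedge \<Omega> p q" using Ff(1) pq by (simp add: bedge_def)
  then show ?thesis using F(2) pq by blast
qed

lemma frontier_ne: "frontier \<Omega> \<noteq> {}"
proof
  assume "frontier \<Omega> = {}"
  then have "closure \<Omega> \<subseteq> \<Omega>" using basics(1) by (simp add: frontier_def interior_open)
  then have "closed \<Omega>" by (simp add: closure_subset_eq)
  then have "\<Omega> = UNIV" using clopen[of \<Omega>] basics by blast
  then show False using basics(3) not_bounded_UNIV by simp
qed

end



lemma grad_eqI:
  assumes "(f has_derivative (\<lambda>h. c \<bullet> h)) (at x)"
  shows "grad f x = c"
  unfolding grad_def
proof (rule the_equality)
  show "(f has_derivative (\<lambda>h. c \<bullet> h)) (at x)" by fact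
  fix g assume "(f has_derivative (\<lambda>h. g \<bullet> h)) (at x)"
  then have "(\<lambda>h. g \<bullet> h) = (\<lambda>h. c \<bullet> h)" using has_derivative_unique assms by blast
  then have "g \<bullet> (g - c) = c \<bullet> (g - c)" by metis
  then have "(g - c) \<bullet> (g - c) = 0" by (simp add: inner_diff_left)
  then show "g = c" by simp
qed

lemma bilg_plus: "bilg U p \<Longrightarrow> bilg U r \<Longrightarrow> bilg U (\<lambda>u v. p u v + r u v)"
  unfolding bilg_def linf_def by (simp add: distrib_left)

lemma symf_plus: "symf U p \<Longrightarrow> symf U r \<Longrightarrow> symf U (\<lambda>u v. p u v + r u v)"
  unfolding symf_def by simp

lemma bound_finite:
  assumes "finite I" "\<forall>i\<in>I. \<exists>b. \<forall>x\<in>S i. \<bar>f i x\<bar> \<le> (b::real)"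
  shows "\<exists>B. \<forall>i\<in>I. \<forall>x\<in>S i. \<bar>f i x\<bar> \<le> B"
  using assms
proof (induction I rule: finite_induct)
  case empty then show ?case by auto
next
  case (insert i I)
  then obtain B where B: "\<forall>i\<in>I. \<forall>x\<in>S i. \<bar>f i x\<bar> \<le> B" by auto
  obtain b where b: "\<forall>x\<in>S i. \<bar>f i x\<bar> \<le> b" using insert by auto
  show ?case
    by (rule exI[of _ "max B b"]) (use B b in \<open>force intro: max.coboundedI1 max.coboundedI2\<close>)
qed

lemma cont_bounded:
  fixes h :: "'a::metric_space \<Rightarrow> real"
  assumes "compact S" "continuous_on S h"
  shows "\<exists>b. \<forall>x\<in>S. \<bar>h x\<bar> \<le> b"
proof -
  have "bounded (h ` S)" using compact_continuous_image[OF assms(2,1)] compact_imp_bounded by blast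
  then show ?thesis unfolding bounded_iff by auto
qed

lemma cmul_int: "(f::'a::euclidean_space \<Rightarrow> real) integrable_on S \<Longrightarrow> (\<lambda>x. c * f x) integrable_on S"
  using integrable_on_cmult_left[of f S c] by simp

lemma L2_mult_integrable:
  fixes f h :: "'a::euclidean_space \<Rightarrow> real"
  assumes S: "S \<in> lmeasurable" and f: "f measurable_on S" "(\<lambda>x. (f x)\<^sup>2) integrable_on S"
    and h: "h \<in> borel_measurable (lebesgue_on S)" "\<forall>x\<in>S. \<bar>h x\<bar> \<le> B"
  shows "(\<lambda>x. f x * h x) integrable_on S"
proof -
  have Sl: "S \<in> sets lebesgue" using S by (simp add: fmeasurableD)
  have fb: "f \<in> borel_measurable (lebesgue_on S)" by (rule measurable_on_iff_borel_measurable[OF Sl, THEN iffD1, OF f(1)])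
  define B' where "B' = max B 0"
  have G: "(\<lambda>x. B' / 2 + B' / 2 * (f x)\<^sup>2) integrable_on S"
    by (rule integrable_add[OF integrable_on_const[OF S] cmul_int[OF f(2)]])
  show ?thesis
  proof (rule measurable_bounded_by_integrable_imp_integrable_real[OF borel_measurable_times[OF fb h(1)] G _ Sl])
    fix x assume x: "x \<in> S"
    have hB: "\<bar>h x\<bar> \<le> B'" using h(2) x by (auto simp: B'_def)
    have B0: "B' \<ge> 0" by (simp add: B'_def)
    have "\<bar>f x\<bar> \<le> 1 / 2 + (f x)\<^sup>2 / 2"
      using sum_squares_ge_zero[of "\<bar>f x\<bar> - 1" 0] by (simp add: power2_eq_square algebra_simps)
    have "\<bar>f x * h x\<bar> \<le> \<bar>f x\<bar> * B'" using hB by (simp add: abs_mult mult_left_mono)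
    also have "\<dots> \<le> (1 / 2 + (f x)\<^sup>2 / 2) * B'"
      using \<open>\<bar>f x\<bar> \<le> 1 / 2 + (f x)\<^sup>2 / 2\<close> B0 by (rule mult_right_mono)
    finally show "\<bar>f x * h x\<bar> \<le> B' / 2 + B' / 2 * (f x)\<^sup>2" by (simp add: algebra_simps)
  qed
qed

lemma edge_deriv_eqI:
  assumes "t \<in> {0..1}" "((\<lambda>s. \<eta> (seg p q s)) has_real_derivative d) (at t within {0..1})"
  shows "edge_deriv \<eta> p q t = d"
  unfolding edge_deriv_def
proof (rule the_equality)
  show "((\<lambda>s. \<eta> (seg p q s)) has_real_derivative d) (at t within {0..1})" by fact
  fix d' assume "((\<lambda>s. \<eta> (seg p q s)) has_real_derivative d') (at t within {0..1})"
  then show "d' = d"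
    using assms vector_derivative_unique_within_closed_interval[of 0 1 t "\<lambda>s. \<eta> (seg p q s)" d' d]
    by (simp add: has_real_derivative_iff_has_vector_derivative)
qed


context poly
begin

definition EI :: "((real^2) \<Rightarrow> real) \<Rightarrow> bool" where "EI F \<longleftrightarrow> (\<forall>p q. bedge \<Omega> p q \<longrightarrow> (\<lambda>t. F (seg p q t)) integrable_on {0..1})"
definition EC :: "((real^2) \<Rightarrow> real) \<Rightarrow> bool" where "EC F \<longleftrightarrow> (\<forall>p q. bedge \<Omega> p q \<longrightarrow> continuous_on {0..1} (\<lambda>t. F (seg p q t)))"

lemma EC_D: "EC F \<Longrightarrow> bedge \<Omega> p q \<Longrightarrow> continuous_on {0..1} (\<lambda>t. F (seg p q t))"
  unfolding EC_def by blast

lemma EC_EI: assumes "EC F" shows "EI F"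
  unfolding EI_def
proof (intro allI impI)
  fix p q assume b: "bedge \<Omega> p q"
  show "(\<lambda>t. F (seg p q t)) integrable_on {0..1}" by (rule integrable_continuous_real[OF EC_D[OF assms b]])
qed

lemma EC_add: assumes "EC F" "EC G" shows "EC (\<lambda>x. F x + G x)"
  unfolding EC_def
proof (intro allI impI)
  fix p q assume b: "bedge \<Omega> p q"
  show "continuous_on {0..1} (\<lambda>t. F (seg p q t) + G (seg p q t))"
    by (rule continuous_on_add[OF EC_D[OF assms(1) b] EC_D[OF assms(2) b]])
qed

lemma EC_diff: assumes "EC F" "EC G" shows "EC (\<lambda>x. F x - G x)"
  unfolding EC_def
proof (intro allI impI)
  fix p q assume b: "bedge \<Omega> p q"
  show "continuous_on {0..1} (\<lambda>t. F (seg p q t) - G (seg p q t))"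
    by (rule continuous_on_diff[OF EC_D[OF assms(1) b] EC_D[OF assms(2) b]])
qed

lemma EC_mult: assumes "EC F" "EC G" shows "EC (\<lambda>x. F x * G x)"
  unfolding EC_def
proof (intro allI impI)
  fix p q assume b: "bedge \<Omega> p q"
  show "continuous_on {0..1} (\<lambda>t. F (seg p q t) * G (seg p q t))"
    by (rule continuous_on_mult[OF EC_D[OF assms(1) b] EC_D[OF assms(2) b]])
qed

lemma EC_const: "EC (\<lambda>x. c)"
  unfolding EC_def by auto

lemma EC_abs: assumes "EC F" shows "EC (\<lambda>x. \<bar>F x\<bar>)"
  unfolding EC_def
proof (intro allI impI)
  fix p q assume b: "bedge \<Omega> p q"
  have "continuous_on {0..1} (\<lambda>t. norm (F (seg p q t)))"
    by (rule continuous_on_norm[OF EC_D[OF assms b]])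
  then show "continuous_on {0..1} (\<lambda>t. \<bar>F (seg p q t)\<bar>)" by simp
qed

lemma Ed_finite: "finite {(p, q). bedge \<Omega> p q}" by (rule bedge_finite)

lemma EC_bound: "EC F \<Longrightarrow> \<exists>B. \<forall>p q t. bedge \<Omega> p q \<longrightarrow> t \<in> {0..1} \<longrightarrow> \<bar>F (seg p q t)\<bar> \<le> B"
proof -
  assume F: "EC F"
  have "\<forall>i\<in>{(p, q). bedge \<Omega> p q}. \<exists>b. \<forall>t\<in>{0..1::real}. \<bar>F (seg (fst i) (snd i) t)\<bar> \<le> b"
  proof
    fix i assume "i \<in> {(p, q). bedge \<Omega> p q}"
    then have "continuous_on {0..1} (\<lambda>t. F (seg (fst i) (snd i) t))" using EC_D[OF F] by auto
    then show "\<exists>b. \<forall>t\<in>{0..1::real}. \<bar>F (seg (fst i) (snd i) t)\<bar> \<le> b"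
      using cont_bounded[OF compact_Icc] by blast
  qed
  from bound_finite[OF Ed_finite this] show ?thesis by fastforce
qed

lemma bint_add: "EI F \<Longrightarrow> EI G \<Longrightarrow> bint \<Omega> (\<lambda>x. F x + G x) = bint \<Omega> F + bint \<Omega> G"
proof -
  assume F: "EI F" and G: "EI G"
  have "(\<Sum>pq\<in>{(p, q). bedge \<Omega> p q}. dist (fst pq) (snd pq) *
          integral {0..1} (\<lambda>t. F (seg (fst pq) (snd pq) t) + G (seg (fst pq) (snd pq) t)))
      = (\<Sum>pq\<in>{(p, q). bedge \<Omega> p q}. dist (fst pq) (snd pq) * integral {0..1} (\<lambda>t. F (seg (fst pq) (snd pq) t))
          + dist (fst pq) (snd pq) * integral {0..1} (\<lambda>t. G (seg (fst pq) (snd pq) t)))"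
    using F G unfolding EI_def by (intro sum.cong) (auto simp: integral_add distrib_left)
  then show ?thesis unfolding bint_def by (simp add: sum.distrib add_divide_distrib)
qed

lemma bint_cmul: "bint \<Omega> (\<lambda>x. c * F x) = c * bint \<Omega> F"
  unfolding bint_def by (simp add: sum_distrib_left mult_ac)

lemma bint_mono:
  assumes "EI F" "EI G" "\<And>p q t. bedge \<Omega> p q \<Longrightarrow> t \<in> {0..1} \<Longrightarrow> F (seg p q t) \<le> G (seg p q t)"
  shows "bint \<Omega> F \<le> bint \<Omega> G"
  unfolding bint_def
proof (rule divide_right_mono[OF sum_mono])
  fix pq assume "pq \<in> {(p, q). bedge \<Omega> p q}"
  then have b: "bedge \<Omega> (fst pq) (snd pq)" by auto
  show "dist (fst pq) (snd pq) * integral {0..1} (\<lambda>t. F (seg (fst pq) (snd pq) t))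
      \<le> dist (fst pq) (snd pq) * integral {0..1} (\<lambda>t. G (seg (fst pq) (snd pq) t))"
    using assms b unfolding EI_def by (intro mult_left_mono integral_le) auto
qed simp

lemma bint_cong:
  assumes "\<And>p q t. bedge \<Omega> p q \<Longrightarrow> t \<in> {0..1} \<Longrightarrow> F (seg p q t) = G (seg p q t)"
  shows "bint \<Omega> F = bint \<Omega> G"
  unfolding bint_def using assms by (intro arg_cong[where f="\<lambda>x. x / 2"] sum.cong refl) (auto intro!: integral_cong)

lemma bint_abs: "EC F \<Longrightarrow> \<bar>bint \<Omega> F\<bar> \<le> bint \<Omega> (\<lambda>x. \<bar>F x\<bar>)"
proof -
  assume F: "EC F"
  have 1: "bint \<Omega> F \<le> bint \<Omega> (\<lambda>x. \<bar>F x\<bar>)"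
    using F EC_abs EC_EI by (intro bint_mono) auto
  have 3: "EC (\<lambda>x. (-1) * F x)" by (rule EC_mult[OF EC_const F])
  have "bint \<Omega> (\<lambda>x. (-1) * F x) \<le> bint \<Omega> (\<lambda>x. \<bar>F x\<bar>)"
    by (rule bint_mono[OF EC_EI[OF 3] EC_EI[OF EC_abs[OF F]]]) simp
  then have 2: "- bint \<Omega> F \<le> bint \<Omega> (\<lambda>x. \<bar>F x\<bar>)" using bint_cmul[of "-1" F] by simp
  show ?thesis using 1 2 by simp
qed

lemma bedge_ex: "\<exists>p q. bedge \<Omega> p q"
  using frontier_ne frontier_edges by blast

lemma bint_pos:
  assumes "EC F" "\<And>x. x \<in> frontier \<Omega> \<Longrightarrow> F x \<ge> m" "m > 0"
  shows "bint \<Omega> F > 0"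
proof -
  have "(\<Sum>pq\<in>{(p, q). bedge \<Omega> p q}. dist (fst pq) (snd pq) * integral {0..1} (\<lambda>t. F (seg (fst pq) (snd pq) t))) > 0"
  proof (rule sum_pos[OF Ed_finite])
    show "{(p, q). bedge \<Omega> p q} \<noteq> {}" using bedge_ex by auto
    fix pq assume "pq \<in> {(p, q). bedge \<Omega> p q}"
    then have b: "bedge \<Omega> (fst pq) (snd pq)" by auto
    then have d: "dist (fst pq) (snd pq) > 0" by (simp add: bedge_def)
    have "integral {0..1::real} (\<lambda>t. m) \<le> integral {0..1} (\<lambda>t. F (seg (fst pq) (snd pq) t))"
      using assms b bedge_seg_frontier unfolding EC_def
      by (intro integral_le) (auto intro: integrable_continuous_real)
    then have "integral {0..1} (\<lambda>t. F (seg (fst pq) (snd pq) t)) > 0" using assms(3) by simp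
    then show "dist (fst pq) (snd pq) * integral {0..1} (\<lambda>t. F (seg (fst pq) (snd pq) t)) > 0"
      using d by simp
  qed
  then show ?thesis unfolding bint_def by simp
qed


definition C1w :: "((real^2) \<Rightarrow> real) \<Rightarrow> bool" where
  "C1w \<eta> \<longleftrightarrow> EC \<eta> \<and> (\<forall>p q. bedge \<Omega> p q \<longrightarrow> continuous_on {0..1} (edge_deriv \<eta> p q))"

lemma C1_EC: "\<eta> \<in> C1_bdry \<Omega> \<Longrightarrow> EC \<eta>"
  unfolding EC_def C1_bdry_def by (auto intro: DERIV_continuous_on)

lemma C1_C1w: "\<eta> \<in> C1_bdry \<Omega> \<Longrightarrow> C1w \<eta>"
  using C1_EC unfolding C1w_def C1_bdry_def by auto

lemma C1_diff_C1w:
  assumes "\<eta>1 \<in> C1_bdry \<Omega>" "\<eta>2 \<in> C1_bdry \<Omega>"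
  shows "C1w (\<lambda>x. \<eta>1 x - \<eta>2 x)"
  unfolding C1w_def
proof (intro conjI allI impI)
  show "EC (\<lambda>x. \<eta>1 x - \<eta>2 x)" using EC_diff[OF C1_EC[OF assms(1)] C1_EC[OF assms(2)]] .
  fix p q assume b: "bedge \<Omega> p q"
  have d1: "\<forall>t\<in>{0..1}. ((\<lambda>s. \<eta>1 (seg p q s)) has_real_derivative edge_deriv \<eta>1 p q t) (at t within {0..1})"
    and c1: "continuous_on {0..1} (edge_deriv \<eta>1 p q)"
    using assms(1) b unfolding C1_bdry_def by auto
  have d2: "\<forall>t\<in>{0..1}. ((\<lambda>s. \<eta>2 (seg p q s)) has_real_derivative edge_deriv \<eta>2 p q t) (at t within {0..1})"
    and c2: "continuous_on {0..1} (edge_deriv \<eta>2 p q)"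
    using assms(2) b unfolding C1_bdry_def by auto
  have e: "edge_deriv (\<lambda>x. \<eta>1 x - \<eta>2 x) p q t = edge_deriv \<eta>1 p q t - edge_deriv \<eta>2 p q t"
    if t: "t \<in> {0..1}" for t
    by (rule edge_deriv_eqI[OF t DERIV_diff[OF d1[rule_format, OF t] d2[rule_format, OF t]]])
  have "continuous_on {0..1} (\<lambda>t. edge_deriv \<eta>1 p q t - edge_deriv \<eta>2 p q t)"
    by (rule continuous_on_diff[OF c1 c2])
  moreover have "continuous_on {0..1} (edge_deriv (\<lambda>x. \<eta>1 x - \<eta>2 x) p q)
      = continuous_on {0..1} (\<lambda>t. edge_deriv \<eta>1 p q t - edge_deriv \<eta>2 p q t)"
    by (rule continuous_on_cong[OF refl]) (rule e)
  ultimately show "continuous_on {0..1} (edge_deriv (\<lambda>x. \<eta>1 x - \<eta>2 x) p q)" by simp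
qed

lemma C1w_bounds:
  assumes "C1w \<eta>"
  shows "\<And>x. x \<in> frontier \<Omega> \<Longrightarrow> \<bar>\<eta> x\<bar> \<le> C1_norm \<Omega> \<eta>" "C1_norm \<Omega> \<eta> \<ge> 0"
proof -
  obtain B where B: "\<forall>p q t. bedge \<Omega> p q \<longrightarrow> t \<in> {0..1} \<longrightarrow> \<bar>\<eta> (seg p q t)\<bar> \<le> B"
    using EC_bound assms unfolding C1w_def by blast
  have bd1: "bdd_above ((\<lambda>x. \<bar>\<eta> x\<bar>) ` frontier \<Omega>)"
  proof (rule bdd_aboveI2)
    fix x assume "x \<in> frontier \<Omega>"
    then obtain p q where "bedge \<Omega> p q" "x \<in> closed_segment p q" using frontier_edges by blast
    then show "\<bar>\<eta> x\<bar> \<le> B" using B segment_seg by blast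
  qed
  define Z where "Z = {(p, q, t). bedge \<Omega> p q \<and> t \<in> {0..1::real}}"
  define G where "G = (\<lambda>z. \<bar>edge_deriv \<eta> (fst z) (fst (snd z)) (snd (snd z))\<bar> / dist (fst z) (fst (snd z)))"
  have "\<forall>i\<in>{(p, q). bedge \<Omega> p q}. \<exists>b. \<forall>t\<in>{0..1::real}. \<bar>\<bar>edge_deriv \<eta> (fst i) (snd i) t\<bar> / dist (fst i) (snd i)\<bar> \<le> b"
  proof
    fix i assume "i \<in> {(p, q). bedge \<Omega> p q}"
    then have "continuous_on {0..1} (edge_deriv \<eta> (fst i) (snd i))" "fst i \<noteq> snd i"
      using assms unfolding C1w_def by (auto simp: bedge_def)
    then have "continuous_on {0..1} (\<lambda>t. \<bar>edge_deriv \<eta> (fst i) (snd i) t\<bar> / dist (fst i) (snd i))"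
      by (intro continuous_intros) auto
    then show "\<exists>b. \<forall>t\<in>{0..1::real}. \<bar>\<bar>edge_deriv \<eta> (fst i) (snd i) t\<bar> / dist (fst i) (snd i)\<bar> \<le> b"
      using cont_bounded[OF compact_Icc] by blast
  qed
  from bound_finite[OF Ed_finite this] obtain B2 where
    B2: "\<forall>i\<in>{(p, q). bedge \<Omega> p q}. \<forall>t\<in>{0..1::real}. \<bar>\<bar>edge_deriv \<eta> (fst i) (snd i) t\<bar> / dist (fst i) (snd i)\<bar> \<le> B2"
    by blast
  have bd2: "bdd_above (G ` Z)"
  proof (rule bdd_aboveI2)
    fix z assume "z \<in> Z"
    then show "G z \<le> B2" using B2 unfolding Z_def G_def by fastforce
  qed
  obtain p0 q0 where b0: "bedge \<Omega> p0 q0" using bedge_ex by blast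
  have z0: "(p0, q0, 0) \<in> Z" using b0 by (simp add: Z_def)
  have "0 \<le> G (p0, q0, 0)" by (simp add: G_def)
  also have "\<dots> \<le> (SUP z\<in>Z. G z)" by (rule cSUP_upper[OF z0 bd2])
  finally have S2: "0 \<le> (SUP z\<in>Z. G z)" .
  have C: "C1_norm \<Omega> \<eta> = (SUP x\<in>frontier \<Omega>. \<bar>\<eta> x\<bar>) + (SUP z\<in>Z. G z)"
    unfolding C1_norm_def Z_def G_def by simp
  show le: "\<bar>\<eta> x\<bar> \<le> C1_norm \<Omega> \<eta>" if x: "x \<in> frontier \<Omega>" for x
    using cSUP_upper[OF x bd1] S2 C by simp
  obtain x0 where "x0 \<in> frontier \<Omega>" using frontier_ne by blast
  then show "C1_norm \<Omega> \<eta> \<ge> 0" using le[of x0] by simp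
qed
end

locale fe = poly \<Omega> for \<Omega> +
  fixes T :: "(real^2) set set"
  assumes tri: "fe_triangulation T \<Omega>"
begin

lemma T_finite: "finite T" and T_tri: "K \<in> T \<Longrightarrow> triangle K" and T_Un: "\<Union>T = closure \<Omega>"
  using tri by (auto simp: fe_triangulation_def)

lemma tri_props:
  assumes "K \<in> T" shows "compact K" "convex K" "interior K \<noteq> {}" "K \<subseteq> closure \<Omega>"
proof -
  obtain a b c where K: "K = convex hull {a, b, c}" "\<not> collinear {a, b, c}"
    using T_tri[OF assms] by (auto simp: triangle_def)
  show "compact K" "convex K" using K by (auto simp: compact_convex_hull)
  have d: "a \<noteq> b" "a \<noteq> c" "b \<noteq> c" "\<not> affine_dependent {a, b, c}"
    using K(2) collinear_3_eq_affine_dependent[of a b c] by auto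
  have "card {a, b, c} = Suc DIM(real^2)" using d by simp
  then show "interior K \<noteq> {}" using interior_convex_hull_eq_empty[of "{a, b, c}"] d K by simp
  show "K \<subseteq> closure \<Omega>" using T_Un assms by auto
qed

definition W where "W = (\<Union>K\<in>T. interior K)"

lemma W_open: "open W" unfolding W_def by auto

lemma W_sub: "W \<subseteq> \<Omega>"
proof -
  have "interior K \<subseteq> \<Omega>" if "K \<in> T" for K
    using interior_mono[OF tri_props(4)[OF that]] int_cl by simp
  then show ?thesis unfolding W_def by auto
qed

lemma W_bounded: "bounded W" using W_sub basics(3) bounded_subset by blast

lemma neg_W: "negligible (\<Omega> - W)"
proof (rule negligible_subset)
  show "negligible (\<Union>K\<in>T. frontier K)"
    using T_finite tri_props(2) negligible_convex_frontier by (intro negligible_Union) auto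
  show "\<Omega> - W \<subseteq> (\<Union>K\<in>T. frontier K)"
  proof
    fix x assume x: "x \<in> \<Omega> - W"
    then obtain K where K: "K \<in> T" "x \<in> K" using T_Un closure_subset by blast
    have "closure K = K" using tri_props(1)[OF K(1)] by (simp add: compact_imp_closed)
    then have "x \<in> frontier K" using x K unfolding W_def frontier_def by auto
    then show "x \<in> (\<Union>K\<in>T. frontier K)" using K by auto
  qed
qed

abbreviation V where "V \<equiv> Vh T \<Omega>"

lemma Vh_rep: "v \<in> V \<Longrightarrow> K \<in> T \<Longrightarrow> \<exists>c d. \<forall>y\<in>K. v y = c \<bullet> y + d"
  by (auto simp: Vh_def)

lemma Vh_grad:
  assumes "K \<in> T" "\<forall>y\<in>K. v y = c \<bullet> y + d" "x \<in> interior K"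
  shows "grad v x = c"
proof (rule grad_eqI)
  have "((\<lambda>y. c \<bullet> y + d) has_derivative (\<lambda>h. c \<bullet> h)) (at x)"
    by (auto intro!: derivative_eq_intros)
  then show "(v has_derivative (\<lambda>h. c \<bullet> h)) (at x)"
    by (rule has_derivative_transform_within_open[OF _ open_interior assms(3)])
       (use assms(2) interior_subset in force)
qed

lemma subsp_V: "subsp V"
  unfolding subsp_def
proof (intro conjI ballI allI)
  show "(\<lambda>x. 0) \<in> V" unfolding Vh_def by (auto intro!: exI[of _ 0])
next
  fix u v assume u: "u \<in> V" and v: "v \<in> V"
  show "(\<lambda>x. u x + v x) \<in> V"
    unfolding Vh_def
  proof (safe)
    fix K assume K: "K \<in> T"
    obtain c1 d1 where 1: "\<forall>y\<in>K. u y = c1 \<bullet> y + d1" using Vh_rep[OF u K] by auto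
    obtain c2 d2 where 2: "\<forall>y\<in>K. v y = c2 \<bullet> y + d2" using Vh_rep[OF v K] by auto
    show "\<exists>c d. \<forall>x\<in>K. u x + v x = c \<bullet> x + d"
      using 1 2 by (intro exI[of _ "c1 + c2"] exI[of _ "d1 + d2"]) (simp add: inner_add_left)
  next
    fix x assume "x \<notin> closure \<Omega>" then show "u x + v x = 0" using u v by (simp add: Vh_def)
  qed
next
  fix u c assume u: "u \<in> V"
  show "(\<lambda>x. c * u x) \<in> V"
    unfolding Vh_def
  proof (safe)
    fix K assume K: "K \<in> T"
    obtain c1 d1 where 1: "\<forall>y\<in>K. u y = c1 \<bullet> y + d1" using Vh_rep[OF u K] by auto
    show "\<exists>c' d. \<forall>x\<in>K. c * u x = c' \<bullet> x + d"
      using 1 by (intro exI[of _ "c *\<^sub>R c1"] exI[of _ "c * d1"]) (simp add: algebra_simps)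
  next
    fix x assume "x \<notin> closure \<Omega>" then show "c * u x = 0" using u by (simp add: Vh_def)
  qed
qed

lemma grad_add: "u \<in> V \<Longrightarrow> v \<in> V \<Longrightarrow> x \<in> W \<Longrightarrow> grad (\<lambda>y. u y + v y) x = grad u x + grad v x"
proof -
  assume u: "u \<in> V" and v: "v \<in> V" and x: "x \<in> W"
  obtain K where K: "K \<in> T" "x \<in> interior K" using x by (auto simp: W_def)
  obtain c1 d1 where 1: "\<forall>y\<in>K. u y = c1 \<bullet> y + d1" using Vh_rep[OF u K(1)] by auto
  obtain c2 d2 where 2: "\<forall>y\<in>K. v y = c2 \<bullet> y + d2" using Vh_rep[OF v K(1)] by auto
  have 3: "\<forall>y\<in>K. u y + v y = (c1 + c2) \<bullet> y + (d1 + d2)" using 1 2 by (simp add: inner_add_left)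
  show ?thesis using Vh_grad[OF K(1) 1 K(2)] Vh_grad[OF K(1) 2 K(2)] Vh_grad[OF K(1) 3 K(2)] by simp
qed

lemma grad_smult: "u \<in> V \<Longrightarrow> x \<in> W \<Longrightarrow> grad (\<lambda>y. c * u y) x = c *\<^sub>R grad u x"
proof -
  assume u: "u \<in> V" and x: "x \<in> W"
  obtain K where K: "K \<in> T" "x \<in> interior K" using x by (auto simp: W_def)
  obtain c1 d1 where 1: "\<forall>y\<in>K. u y = c1 \<bullet> y + d1" using Vh_rep[OF u K(1)] by auto
  have 3: "\<forall>y\<in>K. c * u y = (c *\<^sub>R c1) \<bullet> y + c * d1" using 1 by (simp add: algebra_simps)
  show ?thesis using Vh_grad[OF K(1) 1 K(2)] Vh_grad[OF K(1) 3 K(2)] by simp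
qed

lemma Vh_cont: "v \<in> V \<Longrightarrow> continuous_on (closure \<Omega>) v"
proof -
  assume v: "v \<in> V"
  have "continuous_on (\<Union>K\<in>T. K) v"
  proof (rule continuous_on_closed_Union[OF T_finite])
    fix K assume K: "K \<in> T"
    show "closed K" using tri_props(1)[OF K] compact_imp_closed by blast
    obtain c d where 1: "\<forall>y\<in>K. v y = c \<bullet> y + d" using Vh_rep[OF v K] by auto
    have "continuous_on K (\<lambda>y. c \<bullet> y + d)" by (intro continuous_intros)
    then show "continuous_on K v" using continuous_on_cong[of K K v "\<lambda>y. c \<bullet> y + d"] 1 by simp
  qed
  then show ?thesis using T_Un by simp
qed

lemma compact_cl: "compact (closure \<Omega>)" using basics(3) by (simp add: compact_closure)

lemma Vh_bounded: "v \<in> V \<Longrightarrow> \<exists>B. \<forall>x\<in>closure \<Omega>. \<bar>v x\<bar> \<le> B"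
  using cont_bounded[OF compact_cl Vh_cont] by blast

lemma Vh_grad_cont: "v \<in> V \<Longrightarrow> continuous_on W (grad v)"
proof -
  assume v: "v \<in> V"
  have "continuous_on (\<Union>(interior ` T)) (grad v)"
  proof (rule continuous_on_open_Union)
    fix S assume "S \<in> interior ` T"
    then obtain K where K: "K \<in> T" "S = interior K" by auto
    then show "open S" by simp
    obtain c d where 1: "\<forall>y\<in>K. v y = c \<bullet> y + d" using Vh_rep[OF v K(1)] by auto
    have "continuous_on S (\<lambda>y. c)" by simp
    then show "continuous_on S (grad v)"
      using continuous_on_cong[of S S "grad v" "\<lambda>y. c"] Vh_grad[OF K(1) 1] K(2) by simp
  qed
  then show ?thesis by (simp add: W_def)
qed

lemma Vh_grad_bounded: "v \<in> V \<Longrightarrow> \<exists>B. \<forall>x\<in>W. norm (grad v x) \<le> B"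
proof -
  assume v: "v \<in> V"
  have "\<forall>K\<in>T. \<exists>b. \<forall>x\<in>interior K. \<bar>norm (grad v x)\<bar> \<le> b"
  proof
    fix K assume K: "K \<in> T"
    obtain c d where 1: "\<forall>y\<in>K. v y = c \<bullet> y + d" using Vh_rep[OF v K] by auto
    show "\<exists>b. \<forall>x\<in>interior K. \<bar>norm (grad v x)\<bar> \<le> b"
      using Vh_grad[OF K 1] by (intro exI[of _ "norm c"]) auto
  qed
  from bound_finite[OF T_finite this] show ?thesis by (auto simp: W_def)
qed


definition nice :: "((real^2) \<Rightarrow> real) \<Rightarrow> bool" where
  "nice h \<longleftrightarrow> continuous_on W h \<and> (\<exists>B. \<forall>x\<in>W. \<bar>h x\<bar> \<le> B)"

lemma SW_meas: "open S \<Longrightarrow> S \<inter> W \<in> lmeasurable"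
  using W_open W_bounded by (intro lmeasurable_open) auto

lemma SW_neg: "S \<subseteq> \<Omega> \<Longrightarrow> negligible {x \<in> S - S \<inter> W. P x}"
  by (rule negligible_subset[OF neg_W]) auto

lemma nice_int:
  assumes "nice h" "open S" "S \<subseteq> \<Omega>"
  shows "h integrable_on (S \<inter> W)" "h integrable_on S" "integral S h = integral (S \<inter> W) h"
proof -
  obtain B where B: "\<forall>x\<in>W. \<bar>h x\<bar> \<le> B" using assms(1) by (auto simp: nice_def)
  have m: "S \<inter> W \<in> lmeasurable" using SW_meas[OF assms(2)] .
  have c: "continuous_on (S \<inter> W) h" using assms(1) by (auto simp: nice_def intro: continuous_on_subset)
  have hb: "h \<in> borel_measurable (lebesgue_on (S \<inter> W))"
    by (rule continuous_imp_measurable_on_sets_lebesgue[OF c fmeasurableD[OF m]])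
  show i: "h integrable_on (S \<inter> W)"
    by (rule measurable_bounded_by_integrable_imp_integrable_real[OF hb integrable_on_const[OF m] _ fmeasurableD[OF m]])
       (use B in auto)
  have n1: "negligible {x \<in> S - S \<inter> W. h x \<noteq> 0}" using SW_neg[OF assms(3)] .
  have "{x \<in> S \<inter> W - S. h x \<noteq> 0} = {}" by auto
  then have n2: "negligible {x \<in> S \<inter> W - S. h x \<noteq> 0}" by (metis negligible_empty)
  show "h integrable_on S" by (rule integrable_spike_set[OF i n2 n1])
  show "integral S h = integral (S \<inter> W) h" by (rule integral_spike_set[OF n1 n2])
qed

lemma L2_int:
  assumes "L2_on S f" "open S" "S \<subseteq> \<Omega>" "nice h"
  shows "(\<lambda>x. f x * h x) integrable_on S"
proof -
  have m: "S \<inter> W \<in> lmeasurable" using SW_meas[OF assms(2)] .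
  have sd: "negligible (sym_diff S (S \<inter> W))"
    by (rule negligible_subset[OF neg_W]) (use assms(3) in auto)
  have fm: "f measurable_on (S \<inter> W)"
    using measurable_on_spike_set[OF _ sd] assms(1) by (auto simp: L2_on_def)
  have f2: "(\<lambda>x. (f x)\<^sup>2) integrable_on (S \<inter> W)"
    using integrable_spike_set_eq[OF sd] assms(1) by (auto simp: L2_on_def)
  obtain B where B: "\<forall>x\<in>W. \<bar>h x\<bar> \<le> B" using assms(4) by (auto simp: nice_def)
  have c: "continuous_on (S \<inter> W) h" using assms(4) by (auto simp: nice_def intro: continuous_on_subset)
  have hb: "h \<in> borel_measurable (lebesgue_on (S \<inter> W))"
    by (rule continuous_imp_measurable_on_sets_lebesgue[OF c fmeasurableD[OF m]])
  have "(\<lambda>x. f x * h x) integrable_on (S \<inter> W)"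
    by (rule L2_mult_integrable[OF m fm f2 hb]) (use B in auto)
  then show ?thesis by (rule integrable_spike_set_eq[OF sd, THEN iffD2])
qed

lemma nice_add: "nice h1 \<Longrightarrow> nice h2 \<Longrightarrow> nice (\<lambda>x. h1 x + h2 x)"
proof -
  assume a: "nice h1" "nice h2"
  obtain B1 where B1: "\<forall>x\<in>W. \<bar>h1 x\<bar> \<le> B1" using a(1) by (auto simp: nice_def)
  obtain B2 where B2: "\<forall>x\<in>W. \<bar>h2 x\<bar> \<le> B2" using a(2) by (auto simp: nice_def)
  have "\<forall>x\<in>W. \<bar>h1 x + h2 x\<bar> \<le> B1 + B2" using B1 B2 by (auto intro: abs_triangle_ineq[THEN order_trans] add_mono)
  then show ?thesis using a by (auto simp: nice_def intro: continuous_on_add)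
qed

lemma nice_mult: "nice h1 \<Longrightarrow> nice h2 \<Longrightarrow> nice (\<lambda>x. h1 x * h2 x)"
proof -
  assume a: "nice h1" "nice h2"
  obtain B1 where B1: "\<forall>x\<in>W. \<bar>h1 x\<bar> \<le> B1" using a(1) by (auto simp: nice_def)
  obtain B2 where B2: "\<forall>x\<in>W. \<bar>h2 x\<bar> \<le> B2" using a(2) by (auto simp: nice_def)
  have "\<forall>x\<in>W. \<bar>h1 x * h2 x\<bar> \<le> B1 * B2"
    using B1 B2 by (auto simp: abs_mult intro!: mult_mono)
  then show ?thesis using a by (auto simp: nice_def intro: continuous_on_mult)
qed

lemma nice_V: "v \<in> V \<Longrightarrow> nice v"
proof -
  assume v: "v \<in> V"
  have Wc: "W \<subseteq> closure \<Omega>" using W_sub closure_subset by blast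
  obtain B where "\<forall>x\<in>closure \<Omega>. \<bar>v x\<bar> \<le> B" using Vh_bounded[OF v] by blast
  then show ?thesis unfolding nice_def using continuous_on_subset[OF Vh_cont[OF v] Wc] Wc by blast
qed

lemma nice_grad: "u \<in> V \<Longrightarrow> v \<in> V \<Longrightarrow> nice (\<lambda>x. grad u x \<bullet> grad v x)"
proof -
  assume u: "u \<in> V" and v: "v \<in> V"
  obtain B1 where B1: "\<forall>x\<in>W. norm (grad u x) \<le> B1" using Vh_grad_bounded[OF u] by blast
  obtain B2 where B2: "\<forall>x\<in>W. norm (grad v x) \<le> B2" using Vh_grad_bounded[OF v] by blast
  have "\<forall>x\<in>W. \<bar>grad u x \<bullet> grad v x\<bar> \<le> B1 * B2"
  proof
    fix x assume x: "x \<in> W"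
    have "\<bar>grad u x \<bullet> grad v x\<bar> \<le> norm (grad u x) * norm (grad v x)" by (rule Cauchy_Schwarz_ineq2)
    also have "\<dots> \<le> B1 * B2" using B1 B2 x by (intro mult_mono) (auto intro: order_trans[OF norm_ge_zero])
    finally show "\<bar>grad u x \<bullet> grad v x\<bar> \<le> B1 * B2" .
  qed
  then show ?thesis unfolding nice_def
    using continuous_on_inner[OF Vh_grad_cont[OF u] Vh_grad_cont[OF v]] by blast
qed


lemma nice_Om: assumes "nice h" shows "h integrable_on W" "integral \<Omega> h = integral W h"
proof -
  have e: "\<Omega> \<inter> W = W" using W_sub by blast
  show "h integrable_on W" "integral \<Omega> h = integral W h"
    using nice_int[OF assms basics(1) order_refl] e by auto
qed

lemma bilg_sym: "subsp U \<Longrightarrow> symf U p \<Longrightarrow> (\<And>u. u \<in> U \<Longrightarrow> linf U (p u)) \<Longrightarrow> bilg U p"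
  unfolding bilg_def linf_def symf_def subsp_def by simp

definition Aform where "Aform u v = integral \<Omega> (\<lambda>x. grad u x \<bullet> grad v x)"

lemma Aform_bil: "bilg V Aform" "symf V Aform"
proof -
  show s: "symf V Aform" unfolding symf_def Aform_def by (simp add: inner_commute)
  show "bilg V Aform"
  proof (rule bilg_sym[OF subsp_V s])
    fix u assume u: "u \<in> V"
    show "linf V (Aform u)"
      unfolding linf_def
    proof (intro conjI ballI allI)
      fix v1 v2 assume v1: "v1 \<in> V" and v2: "v2 \<in> V"
      have vV: "(\<lambda>x. v1 x + v2 x) \<in> V" using subspD(2)[OF subsp_V v1 v2] .
      have "Aform u (\<lambda>x. v1 x + v2 x) = integral W (\<lambda>x. grad u x \<bullet> grad (\<lambda>x. v1 x + v2 x) x)"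
        unfolding Aform_def using nice_Om(2)[OF nice_grad[OF u vV]] .
      also have "\<dots> = integral W (\<lambda>x. grad u x \<bullet> grad v1 x + grad u x \<bullet> grad v2 x)"
        using grad_add[OF v1 v2] by (intro integral_cong) (simp add: inner_add_right)
      also have "\<dots> = integral W (\<lambda>x. grad u x \<bullet> grad v1 x) + integral W (\<lambda>x. grad u x \<bullet> grad v2 x)"
        by (rule integral_add[OF nice_Om(1)[OF nice_grad[OF u v1]] nice_Om(1)[OF nice_grad[OF u v2]]])
      also have "\<dots> = Aform u v1 + Aform u v2"
        unfolding Aform_def using nice_Om(2)[OF nice_grad[OF u v1]] nice_Om(2)[OF nice_grad[OF u v2]] by simp
      finally show "Aform u (\<lambda>x. v1 x + v2 x) = Aform u v1 + Aform u v2" .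
    next
      fix v c assume v: "v \<in> V"
      have vV: "(\<lambda>x. c * v x) \<in> V" using subspD(3)[OF subsp_V v] .
      have "Aform u (\<lambda>x. c * v x) = integral W (\<lambda>x. grad u x \<bullet> grad (\<lambda>x. c * v x) x)"
        unfolding Aform_def using nice_Om(2)[OF nice_grad[OF u vV]] .
      also have "\<dots> = integral W (\<lambda>x. c * (grad u x \<bullet> grad v x))"
        using grad_smult[OF v] by (intro integral_cong) simp
      also have "\<dots> = c * Aform u v"
        unfolding Aform_def using nice_Om(2)[OF nice_grad[OF u v]] by simp
      finally show "Aform u (\<lambda>x. c * v x) = c * Aform u v" .
    qed
  qed
qed

definition Mform where "Mform S u v = integral S (\<lambda>x. u x * v x)"

lemma Mform_bil: assumes "open S" "S \<subseteq> \<Omega>" shows "bilg V (Mform S)" "symf V (Mform S)"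
proof -
  show s: "symf V (Mform S)" unfolding symf_def Mform_def by (simp add: mult.commute)
  show "bilg V (Mform S)"
  proof (rule bilg_sym[OF subsp_V s])
    fix u assume u: "u \<in> V"
    show "linf V (Mform S u)"
      unfolding linf_def Mform_def
    proof (intro conjI ballI allI)
      fix v1 v2 assume v1: "v1 \<in> V" and v2: "v2 \<in> V"
      have "integral S (\<lambda>x. u x * (v1 x + v2 x)) = integral S (\<lambda>x. u x * v1 x + u x * v2 x)"
        by (simp add: distrib_left)
      also have "\<dots> = integral S (\<lambda>x. u x * v1 x) + integral S (\<lambda>x. u x * v2 x)"
        by (rule integral_add[OF nice_int(2)[OF nice_mult[OF nice_V[OF u] nice_V[OF v1]] assms]
                                  nice_int(2)[OF nice_mult[OF nice_V[OF u] nice_V[OF v2]] assms]])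
      finally show "integral S (\<lambda>x. u x * (v1 x + v2 x)) = integral S (\<lambda>x. u x * v1 x) + integral S (\<lambda>x. u x * v2 x)" .
    next
      fix v c assume v: "v \<in> V"
      show "integral S (\<lambda>x. u x * (c * v x)) = c * integral S (\<lambda>x. u x * v x)"
        using integral_mult_right[of S c "\<lambda>x. u x * v x"] by (simp add: mult_ac)
    qed
  qed
qed

definition Hform where "Hform u v = integral \<Omega> (\<lambda>x. u x * v x + grad u x \<bullet> grad v x)"

lemma Hform_split: "u \<in> V \<Longrightarrow> v \<in> V \<Longrightarrow> Hform u v = Mform \<Omega> u v + Aform u v"
  unfolding Hform_def Mform_def Aform_def
  using nice_int(2)[OF nice_mult[OF nice_V nice_V] basics(1) order_refl] nice_int(2)[OF nice_grad basics(1) order_refl]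
  by (subst integral_add) auto


lemma seg_cont: "continuous_on S (seg p q)"
  unfolding seg_def by (intro continuous_intros)

lemma EC_V: assumes "v \<in> V" shows "EC v"
  unfolding EC_def
proof (intro allI impI)
  fix p q assume b: "bedge \<Omega> p q"
  have "seg p q ` {0..1} \<subseteq> closure \<Omega>"
    using bedge_seg_frontier[OF b] by (auto simp: frontier_def)
  then show "continuous_on {0..1} (\<lambda>t. v (seg p q t))"
    by (rule continuous_on_compose2[OF Vh_cont[OF assms] seg_cont])
qed

definition Bform where "Bform \<alpha> u v = bint \<Omega> (\<lambda>x. \<alpha> x * u x * v x)"

lemma bform_split: "bform \<Omega> \<alpha> u v = Aform u v + Bform \<alpha> u v"
  unfolding bform_def Aform_def Bform_def by simp

lemma Bform_bil: assumes "EC \<alpha>" shows "bilg V (Bform \<alpha>)" "symf V (Bform \<alpha>)"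
proof -
  show s: "symf V (Bform \<alpha>)" unfolding symf_def Bform_def by (simp add: mult_ac)
  show "bilg V (Bform \<alpha>)"
  proof (rule bilg_sym[OF subsp_V s])
    fix u assume u: "u \<in> V"
    show "linf V (Bform \<alpha> u)"
      unfolding linf_def Bform_def
    proof (intro conjI ballI allI)
      fix v1 v2 assume v1: "v1 \<in> V" and v2: "v2 \<in> V"
      have "bint \<Omega> (\<lambda>x. \<alpha> x * u x * (v1 x + v2 x)) = bint \<Omega> (\<lambda>x. \<alpha> x * u x * v1 x + \<alpha> x * u x * v2 x)"
        by (simp add: distrib_left)
      also have "\<dots> = bint \<Omega> (\<lambda>x. \<alpha> x * u x * v1 x) + bint \<Omega> (\<lambda>x. \<alpha> x * u x * v2 x)"
        by (rule bint_add[OF EC_EI[OF EC_mult[OF EC_mult[OF assms EC_V[OF u]] EC_V[OF v1]]]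
                             EC_EI[OF EC_mult[OF EC_mult[OF assms EC_V[OF u]] EC_V[OF v2]]]])
      finally show "bint \<Omega> (\<lambda>x. \<alpha> x * u x * (v1 x + v2 x)) = bint \<Omega> (\<lambda>x. \<alpha> x * u x * v1 x) + bint \<Omega> (\<lambda>x. \<alpha> x * u x * v2 x)" .
    next
      fix v c assume v: "v \<in> V"
      show "bint \<Omega> (\<lambda>x. \<alpha> x * u x * (c * v x)) = c * bint \<Omega> (\<lambda>x. \<alpha> x * u x * v x)"
        using bint_cmul[of c "\<lambda>x. \<alpha> x * u x * v x"] by (simp add: mult_ac)
    qed
  qed
qed

lemma Bform_add: "EC \<beta> \<Longrightarrow> EC \<gamma> \<Longrightarrow> u \<in> V \<Longrightarrow> v \<in> V \<Longrightarrow>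
    Bform (\<lambda>x. \<beta> x + \<gamma> x) u v = Bform \<beta> u v + Bform \<gamma> u v"
  unfolding Bform_def
  using bint_add[OF EC_EI[OF EC_mult[OF EC_mult[OF _ EC_V] EC_V]] EC_EI[OF EC_mult[OF EC_mult[OF _ EC_V] EC_V]], of \<beta> u v \<gamma> u v]
  by (simp add: distrib_right)

lemma Bform_cmul: "Bform (\<lambda>x. c * \<beta> x) u v = c * Bform \<beta> u v"
  unfolding Bform_def using bint_cmul[of c "\<lambda>x. \<beta> x * u x * v x"] by (simp add: mult_ac)

lemma Bform_bound:
  assumes "EC \<eta>" "\<And>x. x \<in> frontier \<Omega> \<Longrightarrow> \<bar>\<eta> x\<bar> \<le> s" "u \<in> V" "v \<in> V"
  shows "\<bar>Bform \<eta> u v\<bar> \<le> s * bint \<Omega> (\<lambda>x. \<bar>u x * v x\<bar>)"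
proof -
  have F: "EC (\<lambda>x. \<eta> x * u x * v x)" by (rule EC_mult[OF EC_mult[OF assms(1) EC_V[OF assms(3)]] EC_V[OF assms(4)]])
  have G: "EC (\<lambda>x. s * \<bar>u x * v x\<bar>)" by (rule EC_mult[OF EC_const EC_abs[OF EC_mult[OF EC_V[OF assms(3)] EC_V[OF assms(4)]]]])
  have "\<bar>Bform \<eta> u v\<bar> \<le> bint \<Omega> (\<lambda>x. \<bar>\<eta> x * u x * v x\<bar>)" unfolding Bform_def by (rule bint_abs[OF F])
  also have "\<dots> \<le> bint \<Omega> (\<lambda>x. s * \<bar>u x * v x\<bar>)"
  proof (rule bint_mono[OF EC_EI[OF EC_abs[OF F]] EC_EI[OF G]])
    fix p q t assume "bedge \<Omega> p q" "t \<in> {0..1::real}"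
    then have "\<bar>\<eta> (seg p q t)\<bar> \<le> s" using assms(2) bedge_seg_frontier by blast
    then show "\<bar>\<eta> (seg p q t) * u (seg p q t) * v (seg p q t)\<bar> \<le> s * \<bar>u (seg p q t) * v (seg p q t)\<bar>"
      by (simp add: abs_mult mult_right_mono mult.assoc)
  qed
  also have "\<dots> = s * bint \<Omega> (\<lambda>x. \<bar>u x * v x\<bar>)" by (rule bint_cmul)
  finally show ?thesis .
qed

lemma Aform_nonneg: "u \<in> V \<Longrightarrow> Aform u u \<ge> 0"
  unfolding Aform_def by (rule integral_nonneg[OF nice_int(2)[OF nice_grad basics(1) order_refl]]) auto

lemma Bform_nonneg: "EC \<alpha> \<Longrightarrow> (\<And>x. x \<in> frontier \<Omega> \<Longrightarrow> \<alpha> x \<ge> 0) \<Longrightarrow> u \<in> V \<Longrightarrow> Bform \<alpha> u u \<ge> 0"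
proof -
  assume a: "EC \<alpha>" "\<And>x. x \<in> frontier \<Omega> \<Longrightarrow> \<alpha> x \<ge> 0" and u: "u \<in> V"
  have "bint \<Omega> (\<lambda>x. 0) \<le> Bform \<alpha> u u"
    unfolding Bform_def
    by (rule bint_mono[OF EC_EI[OF EC_const] EC_EI[OF EC_mult[OF EC_mult[OF a(1) EC_V[OF u]] EC_V[OF u]]]])
       (use a(2) bedge_seg_frontier in \<open>auto simp: mult.assoc\<close>)
  then show ?thesis using bint_cmul[of 0 "\<lambda>x. 0"] by simp
qed


lemma bform_eq: "bform \<Omega> \<alpha> = (\<lambda>u v. Aform u v + Bform \<alpha> u v)"
  by (intro ext) (simp add: bform_split)

lemma bform_bil: "EC \<alpha> \<Longrightarrow> bilg V (bform \<Omega> \<alpha>)" "EC \<alpha> \<Longrightarrow> symf V (bform \<Omega> \<alpha>)"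
  unfolding bform_eq using bilg_plus[OF Aform_bil(1) Bform_bil(1)] symf_plus[OF Aform_bil(2) Bform_bil(2)] by auto

definition xK where "xK K = (SOME x. x \<in> interior K)"

lemma xK: "K \<in> T \<Longrightarrow> xK K \<in> interior K"
  unfolding xK_def using tri_props(3) by (metis ex_in_conv someI_ex)

lemma xK_W: "K \<in> T \<Longrightarrow> xK K \<in> W"
  using xK unfolding W_def by blast

definition Phi :: "(((real^2) \<Rightarrow> real) \<Rightarrow> real) set" where
  "Phi = (\<lambda>K v. v (xK K)) ` T \<union> (\<lambda>(K, i) v. grad v (xK K) $ i) ` (T \<times> UNIV)"

lemma Phi_finite: "finite Phi"
  unfolding Phi_def using T_finite by simp

lemma Phi_lin: "\<forall>\<phi>\<in>Phi. linf V \<phi>"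
proof
  fix \<phi> assume "\<phi> \<in> Phi"
  then consider (a) K where "K \<in> T" "\<phi> = (\<lambda>v. v (xK K))"
    | (b) K i where "K \<in> T" "\<phi> = (\<lambda>v. grad v (xK K) $ i)" unfolding Phi_def by auto
  then show "linf V \<phi>"
  proof cases
    case a then show ?thesis by (simp add: linf_def)
  next
    case b then show ?thesis using grad_add grad_smult xK_W by (simp add: linf_def)
  qed
qed

lemma Phi_sep: "\<forall>v\<in>V. (\<forall>\<phi>\<in>Phi. \<phi> v = 0) \<longrightarrow> v = (\<lambda>x. 0)"
proof (intro ballI impI ext)
  fix v y assume v: "v \<in> V" and z: "\<forall>\<phi>\<in>Phi. \<phi> v = 0"
  show "v y = 0"
  proof (cases "y \<in> closure \<Omega>")
    case False then show ?thesis using v by (simp add: Vh_def)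
  next
    case True
    then obtain K where K: "K \<in> T" "y \<in> K" using T_Un by blast
    obtain c d where cd: "\<forall>y\<in>K. v y = c \<bullet> y + d" using Vh_rep[OF v K(1)] by blast
    have g: "grad v (xK K) = c" using Vh_grad[OF K(1) cd xK[OF K(1)]] .
    have "grad v (xK K) $ i = 0" for i using z K(1) unfolding Phi_def by force
    then have c0: "c = 0" using g by (simp add: vec_eq_iff)
    have "v (xK K) = 0" using z K(1) unfolding Phi_def by force
    then have "d = 0" using cd xK[OF K(1)] interior_subset c0 by force
    then show ?thesis using cd K c0 by simp
  qed
qed

lemma solve:
  assumes "EC \<alpha>" "posd V (bform \<Omega> \<alpha>)" "linf V L"
  shows "\<exists>!u. u \<in> V \<and> (\<forall>v\<in>V. bform \<Omega> \<alpha> u v = L v)"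
proof -
  obtain E where E: "onb V (bform \<Omega> \<alpha>) E"
    using onb_exists[OF Phi_finite subsp_V Phi_lin Phi_sep bform_bil[OF assms(1)] assms(2)] by blast
  have ex: "lc L E \<in> V" "\<forall>v\<in>V. bform \<Omega> \<alpha> (lc L E) v = L v"
    using riesz[OF E subsp_V bform_bil[OF assms(1)] assms(3)] by auto
  show ?thesis
  proof (rule ex1I[of _ "lc L E"])
    show "lc L E \<in> V \<and> (\<forall>v\<in>V. bform \<Omega> \<alpha> (lc L E) v = L v)" using ex by blast
    fix u assume u: "u \<in> V \<and> (\<forall>v\<in>V. bform \<Omega> \<alpha> u v = L v)"
    show "u = lc L E"
      by (rule uniq[OF subsp_V bform_bil(1)[OF assms(1)] assms(2)]) (use u ex in auto)
  qed
qed

lemma bform_posd: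
  assumes a: "EC \<alpha>" "\<And>x. x \<in> frontier \<Omega> \<Longrightarrow> \<alpha> x \<ge> m" "m > 0"
  shows "posd V (bform \<Omega> \<alpha>)"
  unfolding posd_def
proof (intro ballI impI)
  fix u assume u: "u \<in> V" and un: "u \<noteq> (\<lambda>x. 0)"
  show "bform \<Omega> \<alpha> u u > 0"
  proof (rule ccontr)
    assume "\<not> bform \<Omega> \<alpha> u u > 0"
    have A0: "Aform u u \<ge> 0" using Aform_nonneg[OF u] .
    have B0: "Bform \<alpha> u u \<ge> 0" using Bform_nonneg[OF a(1) _ u] a(2,3) by force
    have A: "Aform u u = 0" and B: "Bform \<alpha> u u = 0"
      using \<open>\<not> bform \<Omega> \<alpha> u u > 0\<close> A0 B0 bform_split[of \<alpha> u u] by auto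
    have c0: "c = 0" if K: "K \<in> T" and cd: "\<forall>y\<in>K. u y = c \<bullet> y + d" for K c d
    proof -
      obtain lo hi where box: "cbox lo hi \<subseteq> interior K" "\<forall>i\<in>Basis. lo \<bullet> i < hi \<bullet> i"
        using open_contains_cbox[OF open_interior xK[OF K]] by blast
      have gc: "grad u x \<bullet> grad u x = c \<bullet> c" if "x \<in> cbox lo hi" for x
        using Vh_grad[OF K cd] box(1) that by auto
      have int1: "(\<lambda>x. grad u x \<bullet> grad u x) integrable_on cbox lo hi"
      proof -
        have "(\<lambda>x. c \<bullet> c) integrable_on cbox lo hi" by (rule integrable_const)
        then show ?thesis using integrable_eq[of "\<lambda>x. c \<bullet> c" "cbox lo hi" "\<lambda>x. grad u x \<bullet> grad u x"] gc by simp
      qed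
      have sub: "cbox lo hi \<subseteq> W" using box(1) K unfolding W_def by blast
      have "integral (cbox lo hi) (\<lambda>x. grad u x \<bullet> grad u x) \<le> integral W (\<lambda>x. grad u x \<bullet> grad u x)"
        by (rule integral_subset_le[OF sub int1 nice_Om(1)[OF nice_grad[OF u u]]]) auto
      also have "\<dots> = 0" using A nice_Om(2)[OF nice_grad[OF u u]] by (simp add: Aform_def)
      finally have le0: "integral (cbox lo hi) (\<lambda>x. grad u x \<bullet> grad u x) \<le> 0" .
      have "integral (cbox lo hi) (\<lambda>x. grad u x \<bullet> grad u x) = integral (cbox lo hi) (\<lambda>x. c \<bullet> c)"
        by (rule integral_cong) (rule gc)
      then have "integral (cbox lo hi) (\<lambda>x. c \<bullet> c) \<le> 0" using le0 by simp
      then have "Henstock_Kurzweil_Integration.content (cbox lo hi) * (c \<bullet> c) \<le> 0" by simp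
      moreover have "Henstock_Kurzweil_Integration.content (cbox lo hi) > 0" using box(2) content_pos_lt_eq by blast
      ultimately have "c \<bullet> c \<le> 0" by (simp add: mult_le_0_iff)
      then show "c = 0" by (metis inner_ge_zero inner_eq_zero_iff order_antisym)
    qed
    have img: "u ` closure \<Omega> \<subseteq> (\<lambda>K. u (xK K)) ` T"
    proof
      fix z assume "z \<in> u ` closure \<Omega>"
      then obtain y where y: "y \<in> closure \<Omega>" "z = u y" by blast
      then obtain K where K: "K \<in> T" "y \<in> K" using T_Un by blast
      obtain c d where cd: "\<forall>y\<in>K. u y = c \<bullet> y + d" using Vh_rep[OF u K(1)] by blast
      have "c = 0" using c0[OF K(1) cd] .
      then have "u y = u (xK K)" using cd K xK[OF K(1)] interior_subset by force
      then show "z \<in> (\<lambda>K. u (xK K)) ` T" using y K by blast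
    qed
    have fin: "finite (u ` closure \<Omega>)" using finite_subset[OF img] T_finite by blast
    have conn: "connected (u ` closure \<Omega>)"
      using connected_continuous_image[OF Vh_cont[OF u]] basics(4) convex_closure convex_connected by blast
    have ne: "u ` closure \<Omega> \<noteq> {}" using basics(2) closure_subset by blast
    obtain k where k: "u ` closure \<Omega> = {k}" using connected_finite_iff_sing[OF conn] fin ne by blast
    have uk: "u y = k" if "y \<in> closure \<Omega>" for y using k that by blast
    have "k \<noteq> 0"
    proof
      assume "k = 0"
      then have "u = (\<lambda>x. 0)" using uk u by (auto simp: Vh_def fun_eq_iff)
      then show False using un by simp
    qed
    have fr: "frontier \<Omega> \<subseteq> closure \<Omega>" by (auto simp: frontier_def)
    have "bint \<Omega> (\<lambda>x. \<alpha> x * u x * u x) > 0"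
    proof (rule bint_pos[OF EC_mult[OF EC_mult[OF a(1) EC_V[OF u]] EC_V[OF u]]])
      have "k * k > 0" using \<open>k \<noteq> 0\<close> not_real_square_gt_zero by blast
      then show "m * (k * k) > 0" using a(3) by (rule mult_pos_pos[rotated])
      fix x assume x: "x \<in> frontier \<Omega>"
      then have "u x = k" using uk fr by blast
      then show "\<alpha> x * u x * u x \<ge> m * (k * k)"
        using a(2)[OF x] by (simp add: mult.assoc mult_right_mono)
    qed
    then show False using B by (simp add: Bform_def)
  qed
qed

end




locale setting = fe \<Omega> T for \<Omega> T +
  fixes \<omega> f g q a a0
  assumes om_open: "open \<omega>" and om_sub: "\<omega> \<subseteq> \<Omega>"
    and fL2: "L2_on \<Omega> f" and gH: "H12_bdry \<Omega> g" and qL2: "L2_on \<omega> q"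
    and a0pos: "a0 > 0" and aC1: "a \<in> C1_bdry \<Omega>" and age: "\<forall>x\<in>frontier \<Omega>. a x \<ge> a0"
begin

lemma EI_gv: assumes v: "v \<in> V" shows "EI (\<lambda>x. g x * v x)"
  unfolding EI_def
proof (intro allI impI)
  fix p q assume b: "bedge \<Omega> p q"
  have g1: "(\<lambda>t. g (seg p q t)) measurable_on {0..1}" "(\<lambda>t. (g (seg p q t))\<^sup>2) integrable_on {0..1}"
    using gH b unfolding H12_bdry_def by auto
  have c: "continuous_on {0..1} (\<lambda>t. v (seg p q t))" using EC_D[OF EC_V[OF v] b] .
  have hb: "(\<lambda>t. v (seg p q t)) \<in> borel_measurable (lebesgue_on {0..1})"
    by (rule continuous_imp_measurable_on_sets_lebesgue[OF c]) simp
  obtain B where B: "\<forall>t\<in>{0..1::real}. \<bar>v (seg p q t)\<bar> \<le> B" using cont_bounded[OF compact_Icc c] by blast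
  show "(\<lambda>t. g (seg p q t) * v (seg p q t)) integrable_on {0..1}"
    by (rule L2_mult_integrable[OF _ g1 hb B]) simp
qed

lemma lform_lin: "linf V (lform \<Omega> f g)"
  unfolding linf_def lform_def
proof (intro conjI ballI allI)
  fix v1 v2 assume v1: "v1 \<in> V" and v2: "v2 \<in> V"
  have "bint \<Omega> (\<lambda>x. g x * (v1 x + v2 x)) = bint \<Omega> (\<lambda>x. g x * v1 x + g x * v2 x)"
    by (simp add: distrib_left)
  also have "\<dots> = bint \<Omega> (\<lambda>x. g x * v1 x) + bint \<Omega> (\<lambda>x. g x * v2 x)"
    by (rule bint_add[OF EI_gv[OF v1] EI_gv[OF v2]])
  finally have 1: "bint \<Omega> (\<lambda>x. g x * (v1 x + v2 x)) = bint \<Omega> (\<lambda>x. g x * v1 x) + bint \<Omega> (\<lambda>x. g x * v2 x)" .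
  have "integral \<Omega> (\<lambda>x. f x * (v1 x + v2 x)) = integral \<Omega> (\<lambda>x. f x * v1 x + f x * v2 x)"
    by (simp add: distrib_left)
  also have "\<dots> = integral \<Omega> (\<lambda>x. f x * v1 x) + integral \<Omega> (\<lambda>x. f x * v2 x)"
    by (rule integral_add[OF L2_int[OF fL2 basics(1) order_refl nice_V[OF v1]] L2_int[OF fL2 basics(1) order_refl nice_V[OF v2]]])
  finally show "bint \<Omega> (\<lambda>x. g x * (v1 x + v2 x)) - integral \<Omega> (\<lambda>x. f x * (v1 x + v2 x)) =
       bint \<Omega> (\<lambda>x. g x * v1 x) - integral \<Omega> (\<lambda>x. f x * v1 x) + (bint \<Omega> (\<lambda>x. g x * v2 x) - integral \<Omega> (\<lambda>x. f x * v2 x))"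
    using 1 by simp
next
  fix v c assume v: "v \<in> V"
  show "bint \<Omega> (\<lambda>x. g x * (c * v x)) - integral \<Omega> (\<lambda>x. f x * (c * v x)) =
        c * (bint \<Omega> (\<lambda>x. g x * v x) - integral \<Omega> (\<lambda>x. f x * v x))"
    using bint_cmul[of c "\<lambda>x. g x * v x"] integral_mult_right[of \<Omega> c "\<lambda>x. f x * v x"]
    by (simp add: mult_ac right_diff_distrib)
qed

definition Lq where "Lq v = integral \<omega> (\<lambda>x. q x * v x)"

lemma Lq_lin: "linf V Lq"
  unfolding linf_def Lq_def
proof (intro conjI ballI allI)
  fix v1 v2 assume v1: "v1 \<in> V" and v2: "v2 \<in> V"
  have "integral \<omega> (\<lambda>x. q x * (v1 x + v2 x)) = integral \<omega> (\<lambda>x. q x * v1 x + q x * v2 x)"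
    by (simp add: distrib_left)
  also have "\<dots> = integral \<omega> (\<lambda>x. q x * v1 x) + integral \<omega> (\<lambda>x. q x * v2 x)"
    by (rule integral_add[OF L2_int[OF qL2 om_open om_sub nice_V[OF v1]] L2_int[OF qL2 om_open om_sub nice_V[OF v2]]])
  finally show "integral \<omega> (\<lambda>x. q x * (v1 x + v2 x)) = integral \<omega> (\<lambda>x. q x * v1 x) + integral \<omega> (\<lambda>x. q x * v2 x)" .
next
  fix v c assume v: "v \<in> V"
  show "integral \<omega> (\<lambda>x. q x * (c * v x)) = c * integral \<omega> (\<lambda>x. q x * v x)"
    using integral_mult_right[of \<omega> c "\<lambda>x. q x * v x"] by (simp add: mult_ac)
qed

lemma zrhs: "u \<in> V \<Longrightarrow> v \<in> V \<Longrightarrow> - integral \<omega> (\<lambda>x. (q x - u x) * v x) = Mform \<omega> u v - Lq v"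
proof -
  assume u: "u \<in> V" and v: "v \<in> V"
  have "integral \<omega> (\<lambda>x. (q x - u x) * v x) = integral \<omega> (\<lambda>x. q x * v x - u x * v x)"
    by (simp add: left_diff_distrib)
  also have "\<dots> = integral \<omega> (\<lambda>x. q x * v x) - integral \<omega> (\<lambda>x. u x * v x)"
    by (rule integral_diff[OF L2_int[OF qL2 om_open om_sub nice_V[OF v]] nice_int(2)[OF nice_mult[OF nice_V[OF u] nice_V[OF v]] om_open om_sub]])
  finally show ?thesis by (simp add: Mform_def Lq_def)
qed

lemma linf_diff2: "linf V L1 \<Longrightarrow> linf V L2 \<Longrightarrow> linf V (\<lambda>v. L1 v - L2 v)"
  unfolding linf_def by (simp add: right_diff_distrib)

lemma linf_neg: "linf V L1 \<Longrightarrow> linf V (\<lambda>v. - L1 v)"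
  unfolding linf_def by simp

lemma linf_cong: "linf V L1 \<Longrightarrow> (\<And>v. v \<in> V \<Longrightarrow> L2 v = L1 v) \<Longrightarrow> linf V L2"
  unfolding linf_def using subspD[OF subsp_V] by simp

lemma zrhs_lin: "u \<in> V \<Longrightarrow> linf V (\<lambda>v. - integral \<omega> (\<lambda>x. (q x - u x) * v x))"
  by (rule linf_cong[OF linf_diff2[OF bilgD(1)[OF Mform_bil(1)[OF om_open om_sub]] Lq_lin]]) (auto simp: zrhs)

lemma aEC: "EC a" using C1_EC[OF aC1] .

abbreviation b0 where "b0 \<equiv> bform \<Omega> a"

lemma b0_props: "bilg V b0" "symf V b0" "posd V b0"
  using bform_bil[OF aEC] bform_posd[OF aEC _ a0pos] age by auto

definition E0 where "E0 = (SOME E. onb V b0 E)"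

lemma E0: "onb V b0 E0"
proof -
  have "\<exists>E. onb V b0 E" by (rule onb_exists[OF Phi_finite subsp_V Phi_lin Phi_sep b0_props])
  then show ?thesis unfolding E0_def by (rule someI_ex)
qed

definition nrm where "nrm w = sqrt (b0 w w)"

lemma nrm_nonneg: "w \<in> V \<Longrightarrow> nrm w \<ge> 0"
  unfolding nrm_def using onb_nonneg[OF E0 subsp_V b0_props(1)] by simp

lemma nrm_sq: "w \<in> V \<Longrightarrow> (nrm w)\<^sup>2 = b0 w w"
  unfolding nrm_def using onb_nonneg[OF E0 subsp_V b0_props(1)] by simp

lemma nrm_pos: "w \<in> V \<Longrightarrow> w \<noteq> (\<lambda>x. 0) \<Longrightarrow> nrm w > 0"
  unfolding nrm_def using b0_props(3) by (simp add: posd_def)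


definition KB where "KB = (\<Sum>e\<in>E0. \<Sum>e'\<in>E0. bint \<Omega> (\<lambda>x. \<bar>e x * e' x\<bar>))"
definition KM where "KM = (\<Sum>e\<in>E0. \<Sum>e'\<in>E0. \<bar>Mform \<omega> e e'\<bar>)"
definition KH where "KH = (\<Sum>e\<in>E0. \<Sum>e'\<in>E0. \<bar>Hform e e'\<bar>)"
definition Lam where "Lam = (\<Sum>e\<in>E0. \<bar>lform \<Omega> f g e\<bar>)"
definition Lamq where "Lamq = (\<Sum>e\<in>E0. \<bar>Lq e\<bar>)"

lemma E0V: "E0 \<subseteq> V" using onbD(2)[OF E0] .

lemma bint_abs_nonneg: "u \<in> V \<Longrightarrow> v \<in> V \<Longrightarrow> bint \<Omega> (\<lambda>x. \<bar>u x * v x\<bar>) \<ge> 0"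
proof -
  assume u: "u \<in> V" and v: "v \<in> V"
  have "bint \<Omega> (\<lambda>x. 0) \<le> bint \<Omega> (\<lambda>x. \<bar>u x * v x\<bar>)"
    by (rule bint_mono[OF EC_EI[OF EC_const] EC_EI[OF EC_abs[OF EC_mult[OF EC_V[OF u] EC_V[OF v]]]]]) auto
  then show ?thesis using bint_cmul[of 0 "\<lambda>x. 0"] by simp
qed

lemma consts_nonneg: "KB \<ge> 0" "KM \<ge> 0" "KH \<ge> 0" "Lam \<ge> 0" "Lamq \<ge> 0"
  unfolding KB_def KM_def KH_def Lam_def Lamq_def
  using bint_abs_nonneg E0V by (auto intro!: sum_nonneg)

lemma Bb:
  assumes "EC \<eta>" "\<And>x. x \<in> frontier \<Omega> \<Longrightarrow> \<bar>\<eta> x\<bar> \<le> s" "u \<in> V" "v \<in> V"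
  shows "\<bar>Bform \<eta> u v\<bar> \<le> s * KB * nrm u * nrm v"
proof -
  have "\<bar>Bform \<eta> u v\<bar> \<le> (\<Sum>e\<in>E0. \<Sum>e'\<in>E0. \<bar>Bform \<eta> e e'\<bar>) * nrm u * nrm v"
    unfolding nrm_def by (rule bil_bound[OF E0 subsp_V b0_props(1) Bform_bil(1)[OF assms(1)] assms(3,4)])
  also have "\<dots> \<le> (s * KB) * nrm u * nrm v"
  proof (intro mult_right_mono nrm_nonneg assms)
    have "(\<Sum>e\<in>E0. \<Sum>e'\<in>E0. \<bar>Bform \<eta> e e'\<bar>) \<le> (\<Sum>e\<in>E0. \<Sum>e'\<in>E0. s * bint \<Omega> (\<lambda>x. \<bar>e x * e' x\<bar>))"
      using Bform_bound[OF assms(1,2)] E0V by (intro sum_mono) auto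
    then show "(\<Sum>e\<in>E0. \<Sum>e'\<in>E0. \<bar>Bform \<eta> e e'\<bar>) \<le> s * KB"
      by (simp add: KB_def sum_distrib_left)
  qed
  finally show ?thesis .
qed

lemma Mb: "u \<in> V \<Longrightarrow> v \<in> V \<Longrightarrow> \<bar>Mform \<omega> u v\<bar> \<le> KM * nrm u * nrm v"
  unfolding nrm_def KM_def by (rule bil_bound[OF E0 subsp_V b0_props(1) Mform_bil(1)[OF om_open om_sub]])

lemma lb: "v \<in> V \<Longrightarrow> \<bar>lform \<Omega> f g v\<bar> \<le> Lam * nrm v"
  unfolding nrm_def Lam_def by (rule lin_bound[OF E0 subsp_V b0_props(1) lform_lin])

lemma lqb: "v \<in> V \<Longrightarrow> \<bar>Lq v\<bar> \<le> Lamq * nrm v"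
  unfolding nrm_def Lamq_def by (rule lin_bound[OF E0 subsp_V b0_props(1) Lq_lin])

lemma H1b: "w \<in> V \<Longrightarrow> H1_norm \<Omega> w \<le> sqrt KH * nrm w"
proof -
  assume w: "w \<in> V"
  have "H1_norm \<Omega> w = sqrt (Hform w w)"
    unfolding H1_norm_def Hform_def by (simp add: power2_eq_square power2_norm_eq_inner[symmetric])
  also have "Hform w w = Mform \<Omega> w w + Aform w w" using Hform_split[OF w w] .
  also have "\<dots> \<le> \<bar>Mform \<Omega> w w + Aform w w\<bar>" by simp
  also have "\<dots> \<le> KH * nrm w * nrm w"
  proof -
    have bh: "bilg V (\<lambda>u v. Mform \<Omega> u v + Aform u v)"
      by (rule bilg_plus[OF Mform_bil(1)[OF basics(1) order_refl] Aform_bil(1)])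
    have "\<bar>Mform \<Omega> w w + Aform w w\<bar> \<le> (\<Sum>e\<in>E0. \<Sum>e'\<in>E0. \<bar>Mform \<Omega> e e' + Aform e e'\<bar>) * nrm w * nrm w"
      unfolding nrm_def using bil_bound[OF E0 subsp_V b0_props(1) bh w w] by simp
    also have "(\<Sum>e\<in>E0. \<Sum>e'\<in>E0. \<bar>Mform \<Omega> e e' + Aform e e'\<bar>) = KH"
      unfolding KH_def by (intro sum.cong refl) (metis Hform_split E0V subsetD)
    finally show ?thesis .
  qed
  finally have "H1_norm \<Omega> w \<le> sqrt (KH * nrm w * nrm w)" by (simp add: real_sqrt_le_iff)
  also have "\<dots> = sqrt KH * nrm w" using nrm_nonneg[OF w] by (simp add: real_sqrt_mult)
  finally show ?thesis .
qed

lemma est: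
  assumes w: "w \<in> V" and eq: "\<beta> w w = L w" and co: "\<beta> w w \<ge> \<kappa> * (nrm w)\<^sup>2" and k: "\<kappa> > 0"
    and Lb: "\<bar>L w\<bar> \<le> Cl * nrm w" and Cl: "Cl \<ge> 0"
  shows "nrm w \<le> Cl / \<kappa>"
proof (cases "nrm w = 0")
  case True then show ?thesis using Cl k by simp
next
  case False
  then have n: "nrm w > 0" using nrm_nonneg[OF w] by simp
  have "\<kappa> * nrm w * nrm w \<le> Cl * nrm w" using co eq Lb by (simp add: power2_eq_square mult_ac)
  then have "\<kappa> * nrm w \<le> Cl" using n by simp
  then show ?thesis using k by (simp add: field_simps)
qed

lemma bform_shift: "EC \<beta> \<Longrightarrow> EC \<gamma> \<Longrightarrow> u \<in> V \<Longrightarrow> v \<in> V \<Longrightarrow>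
   bform \<Omega> (\<lambda>x. \<beta> x + \<gamma> x) u v = bform \<Omega> \<beta> u v + Bform \<gamma> u v"
  using Bform_add by (simp add: bform_split)


definition Ub where "Ub = 2 * Lam"
definition Zb where "Zb = 2 * (KM * Ub + Lamq)"

lemma UbZb: "Ub \<ge> 0" "Zb \<ge> 0" using consts_nonneg by (auto simp: Ub_def Zb_def)

end

locale pert = setting \<Omega> T \<omega> f g q a a0 for \<Omega> T \<omega> f g q a a0 +
  fixes \<eta> s
  assumes etaEC: "EC \<eta>" and eta_b: "\<And>x. x \<in> frontier \<Omega> \<Longrightarrow> \<bar>\<eta> x\<bar> \<le> s" and small: "s * KB \<le> 1 / 2"
begin

abbreviation \<alpha> where "\<alpha> \<equiv> (\<lambda>x. a x + \<eta> x)"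

lemma alEC: "EC \<alpha>" using EC_add[OF aEC etaEC] .

lemma coer: "w \<in> V \<Longrightarrow> bform \<Omega> \<alpha> w w \<ge> 1 / 2 * (nrm w)\<^sup>2"
proof -
  assume w: "w \<in> V"
  have "bform \<Omega> \<alpha> w w = b0 w w + Bform \<eta> w w" using bform_shift[OF aEC etaEC w w] .
  moreover have "Bform \<eta> w w \<ge> - (s * KB * nrm w * nrm w)" using Bb[OF etaEC eta_b w w] by simp
  moreover have "s * KB * nrm w * nrm w \<le> 1 / 2 * (nrm w)\<^sup>2"
    using small mult_right_mono[OF small, of "nrm w * nrm w"] by (simp add: power2_eq_square mult_ac)
  ultimately show ?thesis using nrm_sq[OF w] by simp
qed

lemma al_posd: "posd V (bform \<Omega> \<alpha>)"
  unfolding posd_def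
proof (intro ballI impI)
  fix w assume w: "w \<in> V" "w \<noteq> (\<lambda>x. 0)"
  have "(nrm w)\<^sup>2 > 0" using nrm_pos[OF w] by simp
  then show "bform \<Omega> \<alpha> w w > 0" using coer[OF w(1)] by linarith
qed

lemma u_ex: "\<exists>!u. u_eq T \<Omega> f g \<alpha> u"
  unfolding u_eq_def by (rule solve[OF alEC al_posd lform_lin])

abbreviation U where "U \<equiv> uh T \<Omega> f g \<alpha>"

lemma U: "U \<in> V" "\<forall>v\<in>V. bform \<Omega> \<alpha> U v = lform \<Omega> f g v"
  using theI'[OF u_ex] unfolding uh_def u_eq_def by auto

lemma U_b: "nrm U \<le> Ub"
proof -
  have "nrm U \<le> Lam / (1 / 2)"
    by (rule est[where \<beta>="bform \<Omega> \<alpha>" and L="lform \<Omega> f g", OF U(1) _ coer[OF U(1)] _ lb[OF U(1)] consts_nonneg(4)])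
       (use U(2) U(1) in auto)
  then show ?thesis by (simp add: Ub_def)
qed

lemma z_ex: "\<exists>!z. z_eq T \<Omega> \<omega> f g q \<alpha> z"
  unfolding z_eq_def by (rule solve[OF alEC al_posd zrhs_lin[OF U(1)]])

abbreviation Z where "Z \<equiv> zh T \<Omega> \<omega> f g q \<alpha>"

lemma Z: "Z \<in> V" "\<forall>v\<in>V. bform \<Omega> \<alpha> Z v = Mform \<omega> U v - Lq v"
  using theI'[OF z_ex] zrhs[OF U(1)] unfolding zh_def z_eq_def by auto

lemma Z_b: "nrm Z \<le> Zb"
proof -
  have Lb: "\<bar>Mform \<omega> U Z - Lq Z\<bar> \<le> (KM * Ub + Lamq) * nrm Z"
  proof -
    have "\<bar>Mform \<omega> U Z - Lq Z\<bar> \<le> KM * nrm U * nrm Z + Lamq * nrm Z"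
      using Mb[OF U(1) Z(1)] lqb[OF Z(1)] by linarith
    also have "KM * nrm U * nrm Z \<le> KM * Ub * nrm Z"
      using U_b consts_nonneg(2) nrm_nonneg[OF Z(1)] by (intro mult_right_mono mult_left_mono) auto
    finally show ?thesis by (simp add: distrib_right)
  qed
  have "nrm Z \<le> (KM * Ub + Lamq) / (1 / 2)"
    by (rule est[where \<beta>="bform \<Omega> \<alpha>" and L="\<lambda>v. Mform \<omega> U v - Lq v", OF Z(1) _ coer[OF Z(1)] _ Lb])
       (use Z(2) Z(1) consts_nonneg UbZb in auto)
  then show ?thesis by (simp add: Zb_def)
qed

lemma wd: "disc_well_defined T \<Omega> \<omega> f g q \<alpha>"
  unfolding disc_well_defined_def using u_ex z_ex by blast

end



context setting
begin

lemma mk_pert: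
  assumes "EC \<eta>" "\<And>x. x \<in> frontier \<Omega> \<Longrightarrow> \<bar>\<eta> x\<bar> \<le> s" "s * KB \<le> 1 / 2"
  shows "pert \<Omega> T \<omega> f g q a a0 \<eta> s"
  by (rule pert.intro, unfold_locales) (use assms in auto)

definition C0 where "C0 = 2 * KB * (2 * KM * Ub + Zb)"

lemma C0_nonneg: "C0 \<ge> 0" using consts_nonneg UbZb by (simp add: C0_def)

lemma lip:
  assumes p1: "pert \<Omega> T \<omega> f g q a a0 \<eta>1 s1" and p2: "pert \<Omega> T \<omega> f g q a a0 \<eta>2 s2"
    and dEC: "EC (\<lambda>x. \<eta>1 x - \<eta>2 x)" and db: "\<And>x. x \<in> frontier \<Omega> \<Longrightarrow> \<bar>\<eta>1 x - \<eta>2 x\<bar> \<le> \<delta>"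
    and d0: "\<delta> \<ge> 0"
  shows "nrm (\<lambda>x. zh T \<Omega> \<omega> f g q (\<lambda>x. a x + \<eta>1 x) x - zh T \<Omega> \<omega> f g q (\<lambda>x. a x + \<eta>2 x) x) \<le> \<delta> * C0"
proof -
  interpret P1: pert \<Omega> T \<omega> f g q a a0 \<eta>1 s1 by (rule p1)
  interpret P2: pert \<Omega> T \<omega> f g q a a0 \<eta>2 s2 by (rule p2)
  define U1 where "U1 = uh T \<Omega> f g (\<lambda>x. a x + \<eta>1 x)"
  define U2 where "U2 = uh T \<Omega> f g (\<lambda>x. a x + \<eta>2 x)"
  define Z1 where "Z1 = zh T \<Omega> \<omega> f g q (\<lambda>x. a x + \<eta>1 x)"
  define Z2 where "Z2 = zh T \<Omega> \<omega> f g q (\<lambda>x. a x + \<eta>2 x)"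
  define d where "d = (\<lambda>x. \<eta>1 x - \<eta>2 x)"
  define \<alpha>1 where "\<alpha>1 = (\<lambda>x. a x + \<eta>1 x)"
  have U1: "U1 \<in> V" "\<forall>v\<in>V. bform \<Omega> \<alpha>1 U1 v = lform \<Omega> f g v" using P1.U unfolding U1_def \<alpha>1_def by auto
  have U2: "U2 \<in> V" "\<forall>v\<in>V. bform \<Omega> (\<lambda>x. a x + \<eta>2 x) U2 v = lform \<Omega> f g v" "nrm U2 \<le> Ub"
    using P2.U P2.U_b unfolding U2_def by auto
  have Z1: "Z1 \<in> V" "\<forall>v\<in>V. bform \<Omega> \<alpha>1 Z1 v = Mform \<omega> U1 v - Lq v" using P1.Z unfolding Z1_def U1_def \<alpha>1_def by auto
  have Z2: "Z2 \<in> V" "\<forall>v\<in>V. bform \<Omega> (\<lambda>x. a x + \<eta>2 x) Z2 v = Mform \<omega> U2 v - Lq v" "nrm Z2 \<le> Zb"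
    using P2.Z P2.Z_b unfolding Z2_def U2_def by auto
  have a1: "\<alpha>1 = (\<lambda>x. (a x + \<eta>2 x) + d x)" unfolding \<alpha>1_def d_def by auto
  have shift: "bform \<Omega> \<alpha>1 u v = bform \<Omega> (\<lambda>x. a x + \<eta>2 x) u v + Bform d u v" if "u \<in> V" "v \<in> V" for u v
    unfolding a1 using bform_shift[OF P2.alEC dEC[folded d_def] that] .
  have bil1: "bilg V (bform \<Omega> \<alpha>1)" using bform_bil(1)[OF P1.alEC] unfolding \<alpha>1_def .
  have co1: "bform \<Omega> \<alpha>1 w w \<ge> 1 / 2 * (nrm w)\<^sup>2" if "w \<in> V" for w using P1.coer[OF that] unfolding \<alpha>1_def .
  define e where "e = (\<lambda>x. U1 x - U2 x)"
  have eV: "e \<in> V" unfolding e_def by (rule subsp_diff[OF subsp_V U1(1) U2(1)])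
  have e_eq: "bform \<Omega> \<alpha>1 e v = - Bform d U2 v" if v: "v \<in> V" for v
  proof -
    have "bform \<Omega> \<alpha>1 e v = bform \<Omega> \<alpha>1 U1 v - bform \<Omega> \<alpha>1 U2 v"
      unfolding e_def by (rule linf_diff[OF bilgD(2)[OF bil1 v] subsp_V U1(1) U2(1)])
    then show ?thesis using U1(2) U2(2) shift[OF U2(1) v] v by simp
  qed
  have ne: "nrm e \<le> (\<delta> * KB * Ub) / (1 / 2)"
  proof (rule est[where \<beta>="bform \<Omega> \<alpha>1" and L="\<lambda>v. - Bform d U2 v", OF eV e_eq[OF eV] co1[OF eV]])
    have "\<bar>Bform d U2 e\<bar> \<le> \<delta> * KB * nrm U2 * nrm e"
      by (rule Bb[OF dEC[folded d_def] _ U2(1) eV]) (use db in \<open>auto simp: d_def\<close>)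
    also have "\<dots> \<le> \<delta> * KB * Ub * nrm e"
      using U2(3) d0 consts_nonneg(1) nrm_nonneg[OF eV] nrm_nonneg[OF U2(1)]
      by (intro mult_right_mono mult_left_mono) auto
    finally show "\<bar>- Bform d U2 e\<bar> \<le> \<delta> * KB * Ub * nrm e" by simp
    show "0 \<le> \<delta> * KB * Ub" using d0 consts_nonneg(1) UbZb by simp
  qed simp
  define e' where "e' = (\<lambda>x. Z1 x - Z2 x)"
  have e'V: "e' \<in> V" unfolding e'_def by (rule subsp_diff[OF subsp_V Z1(1) Z2(1)])
  have Mlin: "linf V (\<lambda>u. Mform \<omega> u v)" if "v \<in> V" for v
    by (rule bilgD(2)[OF Mform_bil(1)[OF om_open om_sub] that])
  have e'_eq: "bform \<Omega> \<alpha>1 e' v = Mform \<omega> e v - Bform d Z2 v" if v: "v \<in> V" for v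
  proof -
    have "bform \<Omega> \<alpha>1 e' v = bform \<Omega> \<alpha>1 Z1 v - bform \<Omega> \<alpha>1 Z2 v"
      unfolding e'_def by (rule linf_diff[OF bilgD(2)[OF bil1 v] subsp_V Z1(1) Z2(1)])
    moreover have "Mform \<omega> e v = Mform \<omega> U1 v - Mform \<omega> U2 v"
      unfolding e_def by (rule linf_diff[OF Mlin[OF v] subsp_V U1(1) U2(1)])
    ultimately show ?thesis using Z1(2) Z2(2) shift[OF Z2(1) v] v by simp
  qed
  have ne': "nrm e' \<le> (KM * nrm e + \<delta> * KB * Zb) / (1 / 2)"
  proof (rule est[where \<beta>="bform \<Omega> \<alpha>1" and L="\<lambda>v. Mform \<omega> e v - Bform d Z2 v", OF e'V e'_eq[OF e'V] co1[OF e'V]])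
    have "\<bar>Bform d Z2 e'\<bar> \<le> \<delta> * KB * nrm Z2 * nrm e'"
      by (rule Bb[OF dEC[folded d_def] _ Z2(1) e'V]) (use db in \<open>auto simp: d_def\<close>)
    also have "\<dots> \<le> \<delta> * KB * Zb * nrm e'"
      using Z2(3) d0 consts_nonneg(1) nrm_nonneg[OF e'V] nrm_nonneg[OF Z2(1)]
      by (intro mult_right_mono mult_left_mono) auto
    finally have 1: "\<bar>Bform d Z2 e'\<bar> \<le> \<delta> * KB * Zb * nrm e'" .
    have 2: "\<bar>Mform \<omega> e e'\<bar> \<le> KM * nrm e * nrm e'" by (rule Mb[OF eV e'V])
    show "\<bar>Mform \<omega> e e' - Bform d Z2 e'\<bar> \<le> (KM * nrm e + \<delta> * KB * Zb) * nrm e'"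
      using 1 2 by (simp add: distrib_right abs_triangle_ineq4[THEN order_trans])
    show "0 \<le> KM * nrm e + \<delta> * KB * Zb" using d0 consts_nonneg UbZb nrm_nonneg[OF eV] by simp
  qed simp
  have "nrm e' \<le> 2 * (KM * (2 * (\<delta> * KB * Ub)) + \<delta> * KB * Zb)"
  proof -
    have "KM * nrm e \<le> KM * (2 * (\<delta> * KB * Ub))" using ne consts_nonneg(2) by (intro mult_left_mono) auto
    then show ?thesis using ne' by simp
  qed
  also have "\<dots> = \<delta> * C0" by (simp add: C0_def algebra_simps)
  finally show ?thesis unfolding e'_def Z1_def Z2_def .
qed


abbreviation U0 where "U0 \<equiv> uh T \<Omega> f g a"
abbreviation Z0 where "Z0 \<equiv> zh T \<Omega> \<omega> f g q a"

lemma pert0: "pert \<Omega> T \<omega> f g q a a0 (\<lambda>x. 0) 0"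
  by (rule mk_pert) (auto intro: EC_const)

lemma a0eq: "(\<lambda>x. a x + 0) = a" by simp

lemma U0: "U0 \<in> V" "\<forall>v\<in>V. b0 U0 v = lform \<Omega> f g v" "nrm U0 \<le> Ub"
  using pert.U[OF pert0] pert.U_b[OF pert0] unfolding a0eq by auto

lemma Z0: "Z0 \<in> V" "\<forall>v\<in>V. b0 Z0 v = Mform \<omega> U0 v - Lq v" "nrm Z0 \<le> Zb"
  using pert.Z[OF pert0] pert.Z_b[OF pert0] unfolding a0eq by auto

lemma co0: "w \<in> V \<Longrightarrow> b0 w w \<ge> 1 * (nrm w)\<^sup>2" using nrm_sq by simp

abbreviation Ud where "Ud \<eta> \<equiv> udot T \<Omega> f g a \<eta>"
abbreviation Zd where "Zd \<eta> \<equiv> zdot T \<Omega> \<omega> f g q a \<eta>"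

lemma ud_ex: "EC \<eta> \<Longrightarrow> \<exists>!w. udot_eq T \<Omega> f g a \<eta> w"
  unfolding udot_eq_def Bform_def[symmetric]
  by (rule solve[OF aEC b0_props(3) linf_neg[OF bilgD(1)[OF Bform_bil(1) U0(1)]]])

lemma Ud: "EC \<eta> \<Longrightarrow> Ud \<eta> \<in> V" "EC \<eta> \<Longrightarrow> \<forall>v\<in>V. b0 (Ud \<eta>) v = - Bform \<eta> U0 v"
  using theI'[OF ud_ex] unfolding udot_def udot_eq_def Bform_def by auto

lemma zd_ex: "EC \<eta> \<Longrightarrow> \<exists>!w. zdot_eq T \<Omega> \<omega> f g q a \<eta> w"
  unfolding zdot_eq_def Bform_def[symmetric] Mform_def[symmetric]
  by (rule solve[OF aEC b0_props(3) linf_diff2[OF bilgD(1)[OF Mform_bil(1)[OF om_open om_sub] Ud(1)] bilgD(1)[OF Bform_bil(1) Z0(1)]]])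

lemma Zd: "EC \<eta> \<Longrightarrow> Zd \<eta> \<in> V" "EC \<eta> \<Longrightarrow> \<forall>v\<in>V. b0 (Zd \<eta>) v = Mform \<omega> (Ud \<eta>) v - Bform \<eta> Z0 v"
  using theI'[OF zd_ex] unfolding zdot_def zdot_eq_def Bform_def Mform_def by auto

lemma dot_bounds:
  assumes "EC \<eta>" "\<And>x. x \<in> frontier \<Omega> \<Longrightarrow> \<bar>\<eta> x\<bar> \<le> s" "s \<ge> 0"
  shows "nrm (Ud \<eta>) \<le> s * KB * Ub" "nrm (Zd \<eta>) \<le> s * (KM * KB * Ub + KB * Zb)"
proof -
  have uV: "Ud \<eta> \<in> V" and zV: "Zd \<eta> \<in> V" using Ud(1)[OF assms(1)] Zd(1)[OF assms(1)] by auto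
  have "nrm (Ud \<eta>) \<le> (s * KB * Ub) / 1"
  proof (rule est[where \<beta>=b0 and L="\<lambda>v. - Bform \<eta> U0 v", OF uV _ co0[OF uV]])
    show "b0 (Ud \<eta>) (Ud \<eta>) = - Bform \<eta> U0 (Ud \<eta>)" using Ud(2)[OF assms(1)] uV by auto
    have "\<bar>Bform \<eta> U0 (Ud \<eta>)\<bar> \<le> s * KB * nrm U0 * nrm (Ud \<eta>)" by (rule Bb[OF assms(1,2) U0(1) uV])
    also have "\<dots> \<le> s * KB * Ub * nrm (Ud \<eta>)"
      using U0(3) assms(3) consts_nonneg(1) nrm_nonneg[OF uV] by (intro mult_right_mono mult_left_mono) auto
    finally show "\<bar>- Bform \<eta> U0 (Ud \<eta>)\<bar> \<le> s * KB * Ub * nrm (Ud \<eta>)" by simp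
    show "0 \<le> s * KB * Ub" using assms(3) consts_nonneg UbZb by simp
  qed simp
  then show u: "nrm (Ud \<eta>) \<le> s * KB * Ub" by simp
  have "nrm (Zd \<eta>) \<le> (KM * nrm (Ud \<eta>) + s * KB * Zb) / 1"
  proof (rule est[where \<beta>=b0 and L="\<lambda>v. Mform \<omega> (Ud \<eta>) v - Bform \<eta> Z0 v", OF zV _ co0[OF zV]])
    show "b0 (Zd \<eta>) (Zd \<eta>) = Mform \<omega> (Ud \<eta>) (Zd \<eta>) - Bform \<eta> Z0 (Zd \<eta>)" using Zd(2)[OF assms(1)] zV by auto
    have "\<bar>Bform \<eta> Z0 (Zd \<eta>)\<bar> \<le> s * KB * nrm Z0 * nrm (Zd \<eta>)" by (rule Bb[OF assms(1,2) Z0(1) zV])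
    also have "\<dots> \<le> s * KB * Zb * nrm (Zd \<eta>)"
      using Z0(3) assms(3) consts_nonneg(1) nrm_nonneg[OF zV] by (intro mult_right_mono mult_left_mono) auto
    finally have 1: "\<bar>Bform \<eta> Z0 (Zd \<eta>)\<bar> \<le> s * KB * Zb * nrm (Zd \<eta>)" .
    have 2: "\<bar>Mform \<omega> (Ud \<eta>) (Zd \<eta>)\<bar> \<le> KM * nrm (Ud \<eta>) * nrm (Zd \<eta>)" by (rule Mb[OF uV zV])
    show "\<bar>Mform \<omega> (Ud \<eta>) (Zd \<eta>) - Bform \<eta> Z0 (Zd \<eta>)\<bar> \<le> (KM * nrm (Ud \<eta>) + s * KB * Zb) * nrm (Zd \<eta>)"
      using 1 2 by (simp add: distrib_right abs_triangle_ineq4[THEN order_trans])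
    show "0 \<le> KM * nrm (Ud \<eta>) + s * KB * Zb" using assms(3) consts_nonneg UbZb nrm_nonneg[OF uV] by simp
  qed simp
  also have "\<dots> \<le> KM * (s * KB * Ub) + s * KB * Zb" using u consts_nonneg(2) by (simp add: mult_left_mono)
  finally show "nrm (Zd \<eta>) \<le> s * (KM * KB * Ub + KB * Zb)" by (simp add: algebra_simps)
qed


definition C2 where "C2 = 2 * KM * KB * KB * Ub + KB * C0"

lemma C2_nonneg: "C2 \<ge> 0" using consts_nonneg UbZb C0_nonneg by (simp add: C2_def)

lemma frechet:
  assumes p: "pert \<Omega> T \<omega> f g q a a0 \<eta> s" and s0: "s \<ge> 0"
  shows "nrm (\<lambda>x. zh T \<Omega> \<omega> f g q (\<lambda>x. a x + \<eta> x) x - Z0 x - Zd \<eta> x) \<le> s * s * C2"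
proof -
  interpret P: pert \<Omega> T \<omega> f g q a a0 \<eta> s by (rule p)
  define U where "U = uh T \<Omega> f g (\<lambda>x. a x + \<eta> x)"
  define Z where "Z = zh T \<Omega> \<omega> f g q (\<lambda>x. a x + \<eta> x)"
  define \<alpha> where "\<alpha> = (\<lambda>x. a x + \<eta> x)"
  have eEC: "EC \<eta>" by (rule P.etaEC)
  have eb: "\<And>x. x \<in> frontier \<Omega> \<Longrightarrow> \<bar>\<eta> x\<bar> \<le> s" by (rule P.eta_b)
  have U: "U \<in> V" "\<forall>v\<in>V. bform \<Omega> \<alpha> U v = lform \<Omega> f g v" using P.U unfolding U_def \<alpha>_def by auto
  have Z: "Z \<in> V" "\<forall>v\<in>V. bform \<Omega> \<alpha> Z v = Mform \<omega> U v - Lq v" using P.Z unfolding Z_def U_def \<alpha>_def by auto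
  have shift: "bform \<Omega> \<alpha> u v = b0 u v + Bform \<eta> u v" if "u \<in> V" "v \<in> V" for u v
    unfolding \<alpha>_def using bform_shift[OF aEC eEC that] .
  have bil1: "bilg V (bform \<Omega> \<alpha>)" using bform_bil(1)[OF P.alEC] unfolding \<alpha>_def .
  have co1: "bform \<Omega> \<alpha> w w \<ge> 1 / 2 * (nrm w)\<^sup>2" if "w \<in> V" for w using P.coer[OF that] unfolding \<alpha>_def .
  have Mlin: "linf V (\<lambda>u. Mform \<omega> u v)" if "v \<in> V" for v
    by (rule bilgD(2)[OF Mform_bil(1)[OF om_open om_sub] that])
  have ud: "Ud \<eta> \<in> V" "\<forall>v\<in>V. b0 (Ud \<eta>) v = - Bform \<eta> U0 v" using Ud[OF eEC] by auto
  have zd: "Zd \<eta> \<in> V" "\<forall>v\<in>V. b0 (Zd \<eta>) v = Mform \<omega> (Ud \<eta>) v - Bform \<eta> Z0 v" using Zd[OF eEC] by auto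
  have Bx: "\<bar>Bform \<eta> u v\<bar> \<le> s * KB * nrm u * nrm v" if "u \<in> V" "v \<in> V" for u v by (rule Bb[OF eEC eb that])
  have sK: "s * KB \<ge> 0" using s0 consts_nonneg by simp
  define du where "du = (\<lambda>x. U x - U0 x)"
  have duV: "du \<in> V" unfolding du_def by (rule subsp_diff[OF subsp_V U(1) U0(1)])
  have du_eq: "bform \<Omega> \<alpha> du v = - Bform \<eta> U0 v" if v: "v \<in> V" for v
  proof -
    have "bform \<Omega> \<alpha> du v = bform \<Omega> \<alpha> U v - bform \<Omega> \<alpha> U0 v"
      unfolding du_def by (rule linf_diff[OF bilgD(2)[OF bil1 v] subsp_V U(1) U0(1)])
    then show ?thesis using U(2) U0(2) shift[OF U0(1) v] v by simp
  qed
  have ndu: "nrm du \<le> (s * KB * Ub) / (1 / 2)"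
  proof (rule est[where \<beta>="bform \<Omega> \<alpha>" and L="\<lambda>v. - Bform \<eta> U0 v", OF duV du_eq[OF duV] co1[OF duV]])
    have "\<bar>Bform \<eta> U0 du\<bar> \<le> s * KB * nrm U0 * nrm du" by (rule Bx[OF U0(1) duV])
    also have "\<dots> \<le> s * KB * Ub * nrm du"
      using U0(3) sK nrm_nonneg[OF duV] by (intro mult_right_mono mult_left_mono) auto
    finally show "\<bar>- Bform \<eta> U0 du\<bar> \<le> s * KB * Ub * nrm du" by simp
    show "0 \<le> s * KB * Ub" using sK UbZb by simp
  qed simp
  define ru where "ru = (\<lambda>x. du x - Ud \<eta> x)"
  have ruV: "ru \<in> V" unfolding ru_def by (rule subsp_diff[OF subsp_V duV ud(1)])
  have ru_eq: "b0 ru v = - Bform \<eta> du v" if v: "v \<in> V" for v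
  proof -
    have "b0 ru v = b0 du v - b0 (Ud \<eta>) v"
      unfolding ru_def by (rule linf_diff[OF bilgD(2)[OF b0_props(1) v] subsp_V duV ud(1)])
    then show ?thesis using du_eq[OF v] shift[OF duV v] ud(2) v by simp
  qed
  have nru: "nrm ru \<le> (s * KB * nrm du) / 1"
  proof (rule est[where \<beta>=b0 and L="\<lambda>v. - Bform \<eta> du v", OF ruV ru_eq[OF ruV] co0[OF ruV]])
    show "\<bar>- Bform \<eta> du ru\<bar> \<le> s * KB * nrm du * nrm ru" using Bx[OF duV ruV] by simp
    show "0 \<le> s * KB * nrm du" using sK nrm_nonneg[OF duV] by simp
  qed simp
  define dz where "dz = (\<lambda>x. Z x - Z0 x)"
  have dzV: "dz \<in> V" unfolding dz_def by (rule subsp_diff[OF subsp_V Z(1) Z0(1)])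
  have dz_eq: "bform \<Omega> \<alpha> dz v = Mform \<omega> du v - Bform \<eta> Z0 v" if v: "v \<in> V" for v
  proof -
    have "bform \<Omega> \<alpha> dz v = bform \<Omega> \<alpha> Z v - bform \<Omega> \<alpha> Z0 v"
      unfolding dz_def by (rule linf_diff[OF bilgD(2)[OF bil1 v] subsp_V Z(1) Z0(1)])
    moreover have "Mform \<omega> du v = Mform \<omega> U v - Mform \<omega> U0 v"
      unfolding du_def by (rule linf_diff[OF Mlin[OF v] subsp_V U(1) U0(1)])
    ultimately show ?thesis using Z(2) Z0(2) shift[OF Z0(1) v] v by simp
  qed
  have ndz: "nrm dz \<le> (KM * nrm du + s * KB * Zb) / (1 / 2)"
  proof (rule est[where \<beta>="bform \<Omega> \<alpha>" and L="\<lambda>v. Mform \<omega> du v - Bform \<eta> Z0 v", OF dzV dz_eq[OF dzV] co1[OF dzV]])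
    have "\<bar>Bform \<eta> Z0 dz\<bar> \<le> s * KB * nrm Z0 * nrm dz" by (rule Bx[OF Z0(1) dzV])
    also have "\<dots> \<le> s * KB * Zb * nrm dz"
      using Z0(3) sK nrm_nonneg[OF dzV] by (intro mult_right_mono mult_left_mono) auto
    finally have 1: "\<bar>Bform \<eta> Z0 dz\<bar> \<le> s * KB * Zb * nrm dz" .
    have 2: "\<bar>Mform \<omega> du dz\<bar> \<le> KM * nrm du * nrm dz" by (rule Mb[OF duV dzV])
    show "\<bar>Mform \<omega> du dz - Bform \<eta> Z0 dz\<bar> \<le> (KM * nrm du + s * KB * Zb) * nrm dz"
      using 1 2 by (simp add: distrib_right abs_triangle_ineq4[THEN order_trans])
    show "0 \<le> KM * nrm du + s * KB * Zb" using sK consts_nonneg UbZb nrm_nonneg[OF duV] by simp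
  qed simp
  define rz where "rz = (\<lambda>x. dz x - Zd \<eta> x)"
  have rzV: "rz \<in> V" unfolding rz_def by (rule subsp_diff[OF subsp_V dzV zd(1)])
  have rz_eq: "b0 rz v = Mform \<omega> ru v - Bform \<eta> dz v" if v: "v \<in> V" for v
  proof -
    have "b0 rz v = b0 dz v - b0 (Zd \<eta>) v"
      unfolding rz_def by (rule linf_diff[OF bilgD(2)[OF b0_props(1) v] subsp_V dzV zd(1)])
    moreover have "Mform \<omega> ru v = Mform \<omega> du v - Mform \<omega> (Ud \<eta>) v"
      unfolding ru_def by (rule linf_diff[OF Mlin[OF v] subsp_V duV ud(1)])
    ultimately show ?thesis using dz_eq[OF v] shift[OF dzV v] zd(2) v by simp
  qed
  have nrz: "nrm rz \<le> (KM * nrm ru + s * KB * nrm dz) / 1"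
  proof (rule est[where \<beta>=b0 and L="\<lambda>v. Mform \<omega> ru v - Bform \<eta> dz v", OF rzV rz_eq[OF rzV] co0[OF rzV]])
    have 1: "\<bar>Bform \<eta> dz rz\<bar> \<le> s * KB * nrm dz * nrm rz" by (rule Bx[OF dzV rzV])
    have 2: "\<bar>Mform \<omega> ru rz\<bar> \<le> KM * nrm ru * nrm rz" by (rule Mb[OF ruV rzV])
    show "\<bar>Mform \<omega> ru rz - Bform \<eta> dz rz\<bar> \<le> (KM * nrm ru + s * KB * nrm dz) * nrm rz"
      using 1 2 by (simp add: distrib_right abs_triangle_ineq4[THEN order_trans])
    show "0 \<le> KM * nrm ru + s * KB * nrm dz" using sK consts_nonneg nrm_nonneg[OF ruV] nrm_nonneg[OF dzV] by simp
  qed simp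
  have ndu': "nrm du \<le> 2 * (s * KB * Ub)" using ndu by simp
  have nru': "nrm ru \<le> s * KB * (2 * (s * KB * Ub))" using nru mult_left_mono[OF ndu' sK] by simp
  have ndz': "nrm dz \<le> s * C0"
  proof -
    have "KM * nrm du \<le> KM * (2 * (s * KB * Ub))" using ndu' consts_nonneg(2) by (rule mult_left_mono)
    then have "nrm dz \<le> 2 * (KM * (2 * (s * KB * Ub)) + s * KB * Zb)" using ndz by simp
    also have "\<dots> = s * C0" by (simp add: C0_def algebra_simps)
    finally show ?thesis .
  qed
  have "nrm rz \<le> KM * (s * KB * (2 * (s * KB * Ub))) + s * KB * (s * C0)"
  proof -
    have "KM * nrm ru \<le> KM * (s * KB * (2 * (s * KB * Ub)))" using nru' consts_nonneg(2) by (rule mult_left_mono)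
    moreover have "s * KB * nrm dz \<le> s * KB * (s * C0)" using ndz' sK by (rule mult_left_mono)
    ultimately show ?thesis using nrz by simp
  qed
  also have "\<dots> = s * s * C2" by (simp add: C2_def algebra_simps)
  finally show ?thesis unfolding rz_def dz_def Z_def .
qed


lemma udot_eq_iff: "udot_eq T \<Omega> f g a \<eta> w \<longleftrightarrow> w \<in> V \<and> (\<forall>v\<in>V. b0 w v = - Bform \<eta> U0 v)"
  by (simp add: udot_eq_def Bform_def)

lemma zdot_eq_iff: "zdot_eq T \<Omega> \<omega> f g q a \<eta> w \<longleftrightarrow> w \<in> V \<and> (\<forall>v\<in>V. b0 w v = Mform \<omega> (Ud \<eta>) v - Bform \<eta> Z0 v)"
  by (simp add: zdot_eq_def Bform_def Mform_def)

lemma b0lin: "v \<in> V \<Longrightarrow> linf V (\<lambda>u. b0 u v)" by (rule bilgD(2)[OF b0_props(1)])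
lemma Mlin1: "v \<in> V \<Longrightarrow> linf V (\<lambda>u. Mform \<omega> u v)" by (rule bilgD(2)[OF Mform_bil(1)[OF om_open om_sub]])

lemma Ud_add: assumes "EC \<eta>1" "EC \<eta>2"
  shows "Ud (\<lambda>x. \<eta>1 x + \<eta>2 x) = (\<lambda>x. Ud \<eta>1 x + Ud \<eta>2 x)"
proof -
  note u1 = Ud[OF assms(1)] and u2 = Ud[OF assms(2)]
  have P: "udot_eq T \<Omega> f g a (\<lambda>x. \<eta>1 x + \<eta>2 x) (\<lambda>x. Ud \<eta>1 x + Ud \<eta>2 x)"
    unfolding udot_eq_iff
  proof (intro conjI ballI)
    show "(\<lambda>x. Ud \<eta>1 x + Ud \<eta>2 x) \<in> V" using subspD(2)[OF subsp_V u1(1) u2(1)] .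
    fix v assume v: "v \<in> V"
    show "b0 (\<lambda>x. Ud \<eta>1 x + Ud \<eta>2 x) v = - Bform (\<lambda>x. \<eta>1 x + \<eta>2 x) U0 v"
      using linfD(1)[OF b0lin[OF v] u1(1) u2(1)] u1(2) u2(2) v Bform_add[OF assms U0(1) v] by simp
  qed
  show ?thesis unfolding udot_def[of T \<Omega> f g a "\<lambda>x. \<eta>1 x + \<eta>2 x"] by (rule the1_equality[of "udot_eq T \<Omega> f g a (\<lambda>x. \<eta>1 x + \<eta>2 x)", OF ud_ex[OF EC_add[OF assms]] P])
qed

lemma Ud_cmul: assumes "EC \<eta>1"
  shows "Ud (\<lambda>x. c * \<eta>1 x) = (\<lambda>x. c * Ud \<eta>1 x)"
proof -
  note u1 = Ud[OF assms(1)]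
  have P: "udot_eq T \<Omega> f g a (\<lambda>x. c * \<eta>1 x) (\<lambda>x. c * Ud \<eta>1 x)"
    unfolding udot_eq_iff
  proof (intro conjI ballI)
    show "(\<lambda>x. c * Ud \<eta>1 x) \<in> V" using subspD(3)[OF subsp_V u1(1)] .
    fix v assume v: "v \<in> V"
    show "b0 (\<lambda>x. c * Ud \<eta>1 x) v = - Bform (\<lambda>x. c * \<eta>1 x) U0 v"
      using linfD(2)[OF b0lin[OF v] u1(1)] u1(2) v Bform_cmul by simp
  qed
  show ?thesis unfolding udot_def[of T \<Omega> f g a "\<lambda>x. c * \<eta>1 x"] by (rule the1_equality[of "udot_eq T \<Omega> f g a (\<lambda>x. c * \<eta>1 x)", OF ud_ex[OF EC_mult[OF EC_const[of c] assms]] P])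
qed

lemma Zd_add: assumes "EC \<eta>1" "EC \<eta>2"
  shows "Zd (\<lambda>x. \<eta>1 x + \<eta>2 x) = (\<lambda>x. Zd \<eta>1 x + Zd \<eta>2 x)"
proof -
  note u1 = Ud[OF assms(1)] and u2 = Ud[OF assms(2)]
  note z1 = Zd[OF assms(1)] and z2 = Zd[OF assms(2)]
  have P: "zdot_eq T \<Omega> \<omega> f g q a (\<lambda>x. \<eta>1 x + \<eta>2 x) (\<lambda>x. Zd \<eta>1 x + Zd \<eta>2 x)"
    unfolding zdot_eq_iff Ud_add[OF assms]
  proof (intro conjI ballI)
    show "(\<lambda>x. Zd \<eta>1 x + Zd \<eta>2 x) \<in> V" using subspD(2)[OF subsp_V z1(1) z2(1)] .
    fix v assume v: "v \<in> V"
    show "b0 (\<lambda>x. Zd \<eta>1 x + Zd \<eta>2 x) v = Mform \<omega> (\<lambda>x. Ud \<eta>1 x + Ud \<eta>2 x) v - Bform (\<lambda>x. \<eta>1 x + \<eta>2 x) Z0 v"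
      using linfD(1)[OF b0lin[OF v] z1(1) z2(1)] linfD(1)[OF Mlin1[OF v] u1(1) u2(1)] z1(2) z2(2) v
        Bform_add[OF assms Z0(1) v] by simp
  qed
  show ?thesis unfolding zdot_def[of T \<Omega> \<omega> f g q a "\<lambda>x. \<eta>1 x + \<eta>2 x"] by (rule the1_equality[of "zdot_eq T \<Omega> \<omega> f g q a (\<lambda>x. \<eta>1 x + \<eta>2 x)", OF zd_ex[OF EC_add[OF assms]] P])
qed

lemma Zd_cmul: assumes "EC \<eta>1"
  shows "Zd (\<lambda>x. c * \<eta>1 x) = (\<lambda>x. c * Zd \<eta>1 x)"
proof -
  note u1 = Ud[OF assms(1)] and z1 = Zd[OF assms(1)]
  have P: "zdot_eq T \<Omega> \<omega> f g q a (\<lambda>x. c * \<eta>1 x) (\<lambda>x. c * Zd \<eta>1 x)"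
    unfolding zdot_eq_iff Ud_cmul[OF assms]
  proof (intro conjI ballI)
    show "(\<lambda>x. c * Zd \<eta>1 x) \<in> V" using subspD(3)[OF subsp_V z1(1)] .
    fix v assume v: "v \<in> V"
    show "b0 (\<lambda>x. c * Zd \<eta>1 x) v = Mform \<omega> (\<lambda>x. c * Ud \<eta>1 x) v - Bform (\<lambda>x. c * \<eta>1 x) Z0 v"
      using linfD(2)[OF b0lin[OF v] z1(1)] linfD(2)[OF Mlin1[OF v] u1(1)] z1(2) v Bform_cmul
      by (simp add: right_diff_distrib)
  qed
  show ?thesis unfolding zdot_def[of T \<Omega> \<omega> f g q a "\<lambda>x. c * \<eta>1 x"] by (rule the1_equality[of "zdot_eq T \<Omega> \<omega> f g q a (\<lambda>x. c * \<eta>1 x)", OF zd_ex[OF EC_mult[OF EC_const[of c] assms]] P])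
qed

end


theorem theorem3p6:
  fixes \<Omega> \<omega> :: "(real^2) set" and T :: "(real^2) set set"
    and f g q a :: "real^2 \<Rightarrow> real" and a0 :: real
  assumes "convex_polygonal_domain \<Omega>" and "fe_triangulation T \<Omega>"
    and "open \<omega>" and "\<omega> \<noteq> {}" and "\<omega> \<subseteq> \<Omega>"
    and "L2_on \<Omega> f" and "H12_bdry \<Omega> g" and "L2_on \<omega> q"
    and "a0 > 0" and "a \<in> C1_bdry \<Omega>" and "\<forall>x\<in>frontier \<Omega>. a x \<ge> a0"
  shows "\<exists>D. D \<subseteq> C1_bdry \<Omega> \<and> (\<exists>r>0. {\<eta>\<in>C1_bdry \<Omega>. C1_norm \<Omega> \<eta> < r} \<subseteq> D)
     \<and> (\<forall>\<eta>\<in>D. disc_well_defined T \<Omega> \<omega> f g q (\<lambda>x. a x + \<eta> x))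
     \<comment> \<open>(i) Lipschitz estimate\<close>
     \<and> (\<exists>\<rho>>0. \<exists>C>0. \<forall>\<eta>1\<in>D. \<forall>\<eta>2\<in>D. C1_norm \<Omega> \<eta>2 \<le> \<rho> \<longrightarrow>
          H1_norm \<Omega> (\<lambda>x. Za T \<Omega> \<omega> f g q a \<eta>1 x - Za T \<Omega> \<omega> f g q a \<eta>2 x)
            \<le> C * C1_norm \<Omega> (\<lambda>x. \<eta>1 x - \<eta>2 x))
     \<comment> \<open>(ii) unique solvability of the sensitivity equations\<close>
     \<and> (\<forall>\<eta>\<in>C1_bdry \<Omega>. (\<exists>!w. udot_eq T \<Omega> f g a \<eta> w) \<and> (\<exists>!w. zdot_eq T \<Omega> \<omega> f g q a \<eta> w))
     \<comment> \<open>(ii) the map eta to zdot is bounded linear\<close>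
     \<and> (\<forall>\<eta>1\<in>C1_bdry \<Omega>. \<forall>\<eta>2\<in>C1_bdry \<Omega>. \<forall>c::real.
          zdot T \<Omega> \<omega> f g q a (\<lambda>x. \<eta>1 x + \<eta>2 x)
            = (\<lambda>x. zdot T \<Omega> \<omega> f g q a \<eta>1 x + zdot T \<Omega> \<omega> f g q a \<eta>2 x)
          \<and> zdot T \<Omega> \<omega> f g q a (\<lambda>x. c * \<eta>1 x) = (\<lambda>x. c * zdot T \<Omega> \<omega> f g q a \<eta>1 x))
     \<and> (\<exists>K. \<forall>\<eta>\<in>C1_bdry \<Omega>. H1_norm \<Omega> (zdot T \<Omega> \<omega> f g q a \<eta>) \<le> K * C1_norm \<Omega> \<eta>)
     \<comment> \<open>(ii) it is the Frechet derivative of Z_a at 0, as a map into H^1\<close>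
     \<and> (\<forall>\<epsilon>>0. \<exists>\<delta>>0. \<forall>\<eta>\<in>D. C1_norm \<Omega> \<eta> < \<delta> \<longrightarrow>
          H1_norm \<Omega> (\<lambda>x. Za T \<Omega> \<omega> f g q a \<eta> x - Za T \<Omega> \<omega> f g q a (\<lambda>_. 0) x
                           - zdot T \<Omega> \<omega> f g q a \<eta> x)
            \<le> \<epsilon> * C1_norm \<Omega> \<eta>)"
proof -
  interpret S: setting \<Omega> T \<omega> f g q a a0
    by (rule setting.intro, unfold_locales) (use assms in auto)
  have KB0: "S.KB \<ge> 0" using S.consts_nonneg by simp
  have KH0: "sqrt S.KH \<ge> 0" using S.consts_nonneg by simp
  define r where "r = 1 / (2 * S.KB + 2)"
  have r0: "r > 0" using KB0 by (simp add: r_def)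
  have rK: "r * S.KB \<le> 1 / 2" using KB0 by (simp add: r_def field_simps)
  define D where "D = {\<eta> \<in> C1_bdry \<Omega>. C1_norm \<Omega> \<eta> < r}"
  have C1b: "\<And>x. x \<in> frontier \<Omega> \<Longrightarrow> \<bar>\<eta> x\<bar> \<le> C1_norm \<Omega> \<eta>" "C1_norm \<Omega> \<eta> \<ge> 0"
    if "\<eta> \<in> C1_bdry \<Omega>" for \<eta>
    using S.C1w_bounds[OF S.C1_C1w[OF that]] by auto
  have Dp: "pert \<Omega> T \<omega> f g q a a0 \<eta> (C1_norm \<Omega> \<eta>)" if "\<eta> \<in> D" for \<eta>
  proof (rule S.mk_pert)
    have e: "\<eta> \<in> C1_bdry \<Omega>" "C1_norm \<Omega> \<eta> < r" using that by (auto simp: D_def)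
    show "S.EC \<eta>" using S.C1_EC[OF e(1)] .
    show "\<And>x. x \<in> frontier \<Omega> \<Longrightarrow> \<bar>\<eta> x\<bar> \<le> C1_norm \<Omega> \<eta>" using C1b(1)[OF e(1)] .
    have "C1_norm \<Omega> \<eta> * S.KB \<le> r * S.KB" using e(2) KB0 by (intro mult_right_mono) auto
    then show "C1_norm \<Omega> \<eta> * S.KB \<le> 1 / 2" using rK by simp
  qed
  have DC: "\<eta> \<in> D \<Longrightarrow> \<eta> \<in> C1_bdry \<Omega>" for \<eta> by (simp add: D_def)
  have Za: "Za T \<Omega> \<omega> f g q a \<eta> = zh T \<Omega> \<omega> f g q (\<lambda>x. a x + \<eta> x)" for \<eta> by (simp add: Za_def)
  have Za0: "Za T \<Omega> \<omega> f g q a (\<lambda>_. 0) = zh T \<Omega> \<omega> f g q a" by (simp add: Za_def)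
  have ZV: "zh T \<Omega> \<omega> f g q (\<lambda>x. a x + \<eta> x) \<in> Vh T \<Omega>" if "\<eta> \<in> D" for \<eta>
    using pert.Z(1)[OF Dp[OF that]] .
  show ?thesis
  proof (intro exI[of _ D] conjI)
    show "D \<subseteq> C1_bdry \<Omega>" by (auto simp: D_def)
    show "\<exists>r>0. {\<eta> \<in> C1_bdry \<Omega>. C1_norm \<Omega> \<eta> < r} \<subseteq> D" using r0 by (auto simp: D_def)
    show "\<forall>\<eta>\<in>D. disc_well_defined T \<Omega> \<omega> f g q (\<lambda>x. a x + \<eta> x)"
      using pert.wd[OF Dp] by blast
    show "\<exists>\<rho>>0. \<exists>C>0. \<forall>\<eta>1\<in>D. \<forall>\<eta>2\<in>D. C1_norm \<Omega> \<eta>2 \<le> \<rho> \<longrightarrow>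
          H1_norm \<Omega> (\<lambda>x. Za T \<Omega> \<omega> f g q a \<eta>1 x - Za T \<Omega> \<omega> f g q a \<eta>2 x)
            \<le> C * C1_norm \<Omega> (\<lambda>x. \<eta>1 x - \<eta>2 x)"
    proof -
      have Cpos: "sqrt S.KH * S.C0 + 1 > 0" using KH0 S.C0_nonneg by (simp add: add_nonneg_pos)
      have "\<forall>\<eta>1\<in>D. \<forall>\<eta>2\<in>D. C1_norm \<Omega> \<eta>2 \<le> r \<longrightarrow>
          H1_norm \<Omega> (\<lambda>x. Za T \<Omega> \<omega> f g q a \<eta>1 x - Za T \<Omega> \<omega> f g q a \<eta>2 x)
            \<le> (sqrt S.KH * S.C0 + 1) * C1_norm \<Omega> (\<lambda>x. \<eta>1 x - \<eta>2 x)"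
      proof (intro ballI impI)
      fix \<eta>1 \<eta>2 assume e1: "\<eta>1 \<in> D" and e2: "\<eta>2 \<in> D"
      define \<delta> where "\<delta> = C1_norm \<Omega> (\<lambda>x. \<eta>1 x - \<eta>2 x)"
      have w: "S.C1w (\<lambda>x. \<eta>1 x - \<eta>2 x)" by (rule S.C1_diff_C1w[OF DC[OF e1] DC[OF e2]])
      have db: "\<And>x. x \<in> frontier \<Omega> \<Longrightarrow> \<bar>\<eta>1 x - \<eta>2 x\<bar> \<le> \<delta>" "\<delta> \<ge> 0"
        using S.C1w_bounds[OF w] unfolding \<delta>_def by auto
      have dEC: "S.EC (\<lambda>x. \<eta>1 x - \<eta>2 x)" using w by (simp add: S.C1w_def)
      have n: "S.nrm (\<lambda>x. zh T \<Omega> \<omega> f g q (\<lambda>x. a x + \<eta>1 x) x - zh T \<Omega> \<omega> f g q (\<lambda>x. a x + \<eta>2 x) x) \<le> \<delta> * S.C0"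
        by (rule S.lip[OF Dp[OF e1] Dp[OF e2] dEC db])
      have eV: "(\<lambda>x. zh T \<Omega> \<omega> f g q (\<lambda>x. a x + \<eta>1 x) x - zh T \<Omega> \<omega> f g q (\<lambda>x. a x + \<eta>2 x) x) \<in> Vh T \<Omega>"
        by (rule subsp_diff[OF S.subsp_V ZV[OF e1] ZV[OF e2]])
      have "H1_norm \<Omega> (\<lambda>x. Za T \<Omega> \<omega> f g q a \<eta>1 x - Za T \<Omega> \<omega> f g q a \<eta>2 x)
          \<le> sqrt S.KH * S.nrm (\<lambda>x. zh T \<Omega> \<omega> f g q (\<lambda>x. a x + \<eta>1 x) x - zh T \<Omega> \<omega> f g q (\<lambda>x. a x + \<eta>2 x) x)"
        unfolding Za by (rule S.H1b[OF eV])
      also have "\<dots> \<le> sqrt S.KH * (\<delta> * S.C0)" using n KH0 by (rule mult_left_mono)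
      also have "\<dots> \<le> (sqrt S.KH * S.C0 + 1) * \<delta>" using db(2) by (simp add: algebra_simps)
      finally show "H1_norm \<Omega> (\<lambda>x. Za T \<Omega> \<omega> f g q a \<eta>1 x - Za T \<Omega> \<omega> f g q a \<eta>2 x)
            \<le> (sqrt S.KH * S.C0 + 1) * C1_norm \<Omega> (\<lambda>x. \<eta>1 x - \<eta>2 x)" unfolding \<delta>_def .
      qed
      then show ?thesis using r0 Cpos by blast
    qed
    show "\<forall>\<eta>\<in>C1_bdry \<Omega>. (\<exists>!w. udot_eq T \<Omega> f g a \<eta> w) \<and> (\<exists>!w. zdot_eq T \<Omega> \<omega> f g q a \<eta> w)"
      using S.ud_ex[OF S.C1_EC] S.zd_ex[OF S.C1_EC] by blast
    show "\<forall>\<eta>1\<in>C1_bdry \<Omega>. \<forall>\<eta>2\<in>C1_bdry \<Omega>. \<forall>c::real.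
          zdot T \<Omega> \<omega> f g q a (\<lambda>x. \<eta>1 x + \<eta>2 x)
            = (\<lambda>x. zdot T \<Omega> \<omega> f g q a \<eta>1 x + zdot T \<Omega> \<omega> f g q a \<eta>2 x)
          \<and> zdot T \<Omega> \<omega> f g q a (\<lambda>x. c * \<eta>1 x) = (\<lambda>x. c * zdot T \<Omega> \<omega> f g q a \<eta>1 x)"
      using S.Zd_add[OF S.C1_EC S.C1_EC] S.Zd_cmul[OF S.C1_EC] by blast
    show "\<exists>K. \<forall>\<eta>\<in>C1_bdry \<Omega>. H1_norm \<Omega> (zdot T \<Omega> \<omega> f g q a \<eta>) \<le> K * C1_norm \<Omega> \<eta>"
    proof (intro exI[of _ "sqrt S.KH * (S.KM * S.KB * S.Ub + S.KB * S.Zb)"] ballI)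
      fix \<eta> assume e: "\<eta> \<in> C1_bdry \<Omega>"
      have EC: "S.EC \<eta>" using S.C1_EC[OF e] .
      have n: "S.nrm (zdot T \<Omega> \<omega> f g q a \<eta>) \<le> C1_norm \<Omega> \<eta> * (S.KM * S.KB * S.Ub + S.KB * S.Zb)"
        by (rule S.dot_bounds(2)[OF EC C1b(1)[OF e] C1b(2)[OF e]])
      have "H1_norm \<Omega> (zdot T \<Omega> \<omega> f g q a \<eta>) \<le> sqrt S.KH * S.nrm (zdot T \<Omega> \<omega> f g q a \<eta>)"
        by (rule S.H1b[OF S.Zd(1)[OF EC]])
      also have "\<dots> \<le> sqrt S.KH * (C1_norm \<Omega> \<eta> * (S.KM * S.KB * S.Ub + S.KB * S.Zb))"
        using n KH0 by (rule mult_left_mono)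
      finally show "H1_norm \<Omega> (zdot T \<Omega> \<omega> f g q a \<eta>) \<le> sqrt S.KH * (S.KM * S.KB * S.Ub + S.KB * S.Zb) * C1_norm \<Omega> \<eta>"
        by (simp add: mult_ac)
    qed
    show "\<forall>\<epsilon>>0. \<exists>\<delta>>0. \<forall>\<eta>\<in>D. C1_norm \<Omega> \<eta> < \<delta> \<longrightarrow>
          H1_norm \<Omega> (\<lambda>x. Za T \<Omega> \<omega> f g q a \<eta> x - Za T \<Omega> \<omega> f g q a (\<lambda>_. 0) x
                           - zdot T \<Omega> \<omega> f g q a \<eta> x)
            \<le> \<epsilon> * C1_norm \<Omega> \<eta>"
    proof (intro allI impI)
      fix \<epsilon> :: real assume \<epsilon>: "\<epsilon> > 0"
      define M where "M = sqrt S.KH * S.C2 + 1"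
      have M: "M > 0" "sqrt S.KH * S.C2 \<ge> 0" using KH0 S.C2_nonneg by (auto simp: M_def add_nonneg_pos)
      show "\<exists>\<delta>>0. \<forall>\<eta>\<in>D. C1_norm \<Omega> \<eta> < \<delta> \<longrightarrow>
          H1_norm \<Omega> (\<lambda>x. Za T \<Omega> \<omega> f g q a \<eta> x - Za T \<Omega> \<omega> f g q a (\<lambda>_. 0) x
                           - zdot T \<Omega> \<omega> f g q a \<eta> x)
            \<le> \<epsilon> * C1_norm \<Omega> \<eta>"
      proof (intro exI[of _ "\<epsilon> / M"] conjI ballI impI)
        show "\<epsilon> / M > 0" using \<epsilon> M by simp
        fix \<eta> assume e: "\<eta> \<in> D" and sm: "C1_norm \<Omega> \<eta> < \<epsilon> / M"
        define s where "s = C1_norm \<Omega> \<eta>"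
        have s0: "s \<ge> 0" using C1b(2)[OF DC[OF e]] by (simp add: s_def)
        have EC: "S.EC \<eta>" using S.C1_EC[OF DC[OF e]] .
        define rz where "rz = (\<lambda>x. zh T \<Omega> \<omega> f g q (\<lambda>x. a x + \<eta> x) x - zh T \<Omega> \<omega> f g q a x - zdot T \<Omega> \<omega> f g q a \<eta> x)"
        have n: "S.nrm rz \<le> s * s * S.C2" unfolding rz_def s_def by (rule S.frechet[OF Dp[OF e] C1b(2)[OF DC[OF e]]])
        have rzV: "rz \<in> Vh T \<Omega>" unfolding rz_def
          by (rule subsp_diff[OF S.subsp_V subsp_diff[OF S.subsp_V ZV[OF e] S.Z0(1)] S.Zd(1)[OF EC]])
        have eq: "(\<lambda>x. Za T \<Omega> \<omega> f g q a \<eta> x - Za T \<Omega> \<omega> f g q a (\<lambda>_. 0) x - zdot T \<Omega> \<omega> f g q a \<eta> x) = rz"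
          unfolding rz_def Za by simp
        have "H1_norm \<Omega> rz \<le> sqrt S.KH * S.nrm rz" by (rule S.H1b[OF rzV])
        also have "\<dots> \<le> sqrt S.KH * (s * s * S.C2)" using n KH0 by (rule mult_left_mono)
        also have "\<dots> = s * (s * (sqrt S.KH * S.C2))" by (simp add: mult_ac)
        also have "\<dots> \<le> s * \<epsilon>"
        proof (rule mult_left_mono[OF _ s0])
          have "s * (sqrt S.KH * S.C2) \<le> s * M" using s0 by (intro mult_left_mono) (auto simp: M_def)
          also have "\<dots> \<le> \<epsilon>" using sm M(1) by (simp add: s_def field_simps)
          finally show "s * (sqrt S.KH * S.C2) \<le> \<epsilon>" .
        qed
        finally show "H1_norm \<Omega> (\<lambda>x. Za T \<Omega> \<omega> f g q a \<eta> x - Za T \<Omega> \<omega> f g q a (\<lambda>_. 0) x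
                           - zdot T \<Omega> \<omega> f g q a \<eta> x) \<le> \<epsilon> * C1_norm \<Omega> \<eta>"
          unfolding eq by (simp add: s_def mult_ac)
      qed
    qed
  qed
qed


end
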